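(* Let $P$ be a quantum principal bundle with structure Hopf algebra $H$ (invertible antipode $S$) over $M$, and let $\omega:H\to\Omega^1P$ be a connection. The following are equivalent: (i) $\omega$ is a left strong connection; (ii) $(\Delta_L\otimes\mathrm{id})(\omega(h))=h\otimes1\otimes1-\epsilon(h)1\otimes1\otimes1+h_{(1)}\otimes\omega(h_{(2)})$ for all $h\in H$; (iii) $(\mathrm{id}\otimes\Delta_R)(\omega(h))=1\otimes1\otimes h-\epsilon(h)1\otimes1\otimes1+\omega(h_{(1)})\otimes h_{(2)}$ for all $h\in H$. Moreover, in this case $\bar D=(\mathrm{id}-\bar\Pi_\omega)d$ preserves right strong tensoriality: $(\mathrm{id}-\bar\Pi_\omega)(dp)\in P\,\Omega^1M$ for all $p\in P$.
   Context: $k$ is a field. For a unital algebra $A$, $\Omega^1A=\ker(\mu:A\otimes A\to A)$ with $da=1\otimes a-a\otimes1$; forms are multiplied by concatenation (multiplying adjacent tensor factors). A quantum principal bundle: $H$ a Hopf algebra ($\Delta h=h_{(1)}\otimes h_{(2)}$, counit $\epsilon$, invertible antipode $S$); $P$ a right $H$-comodule algebra with $\Delta_R(p)=p^{(1)}\otimes p^{(2)}$; $M=\{p:\Delta_Rp=p\otimes1\}$; $P$ flat over $M$; $P\otimes_MP\to P\otimes H$, $p\otimes p'\mapsto pp'^{(1)}\otimes p'^{(2)}$ bijective. The associated left coaction of $H^{\rm op}$ on $P$ is $\Delta_L(p)=S^{-1}(p^{(2)})\otimes p^{(1)}$, written $\Delta_L(p)=p^{\tilde{(1)}}\otimes p^{\tilde{(2)}}$.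 In (ii), $\Delta_L$ acts on the first tensor factor of $\omega(h)\in P\otimes P$; in (iii), $\Delta_R$ acts on the second. A connection is a linear $\omega:H\to\Omega^1P\subset P\otimes P$ with $\omega(1)=0$, $\sum\omega_\alpha\omega^\alpha{}^{(1)}\otimes\omega^\alpha{}^{(2)}=1\otimes(h-\epsilon(h)1)$ where $\omega(h)=\sum\omega_\alpha\otimes\omega^\alpha$, and $\Delta_R(\omega(h))=\omega(h_{(2)})\otimes S(h_{(1)})h_{(3)}$ (tensor product coaction on $P\otimes P$). $\Pi_\omega(\sum p\otimes p')=\sum pp'^{(1)}\omega(p'^{(2)})$ and $\bar\Pi_\omega(\sum p\otimes p')=\sum\omega(p^{\tilde{(1)}})p^{\tilde{(2)}}p'$ on $\Omega^1P$. $\omega$ is left strong if $(\mathrm{id}-\Pi_\omega)(dp)\in(\Omega^1M)P$ for all $p\in P$. *)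

theory Defs
  imports Complex_Main "HOL-Library.Poly_Mapping"
begin

text \<open>A tensor in V (x) W (over the field 'k) is represented by a list of pairs [(v1,w1),...],
  standing for the sum of the elementary tensors v_i (x) w_i (scalars absorbed into v_i).
  The tensor product is the free 'k-module on pairs modulo the span of the bilinearity
  relations (and, for balanced tensor products, of extra generators).\<close>

definition pm_of :: "'a list \<Rightarrow> ('a \<Rightarrow>\<^sub>0 'k::comm_ring_1)" where
  "pm_of xs = sum_list (map (\<lambda>x. Poly_Mapping.single x 1) xs)"

inductive_set span_gen ::
  "('k::field \<Rightarrow> 'a::plus \<Rightarrow> 'a) \<Rightarrow> ('k \<Rightarrow> 'b::plus \<Rightarrow> 'b) \<Rightarrow> 'a set \<Rightarrow> 'b set
   \<Rightarrow> (('a \<times> 'b) \<Rightarrow>\<^sub>0 'k) set \<Rightarrow> (('a \<times> 'b) \<Rightarrow>\<^sub>0 'k) set"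
  for sA sB A B G where
  zero: "0 \<in> span_gen sA sB A B G"
| addL: "\<lbrakk>a \<in> A; a' \<in> A; b \<in> B\<rbrakk> \<Longrightarrow> Poly_Mapping.single (a + a', b) 1
      - Poly_Mapping.single (a, b) 1 - Poly_Mapping.single (a', b) 1 \<in> span_gen sA sB A B G"
| addR: "\<lbrakk>a \<in> A; b \<in> B; b' \<in> B\<rbrakk> \<Longrightarrow> Poly_Mapping.single (a, b + b') 1
      - Poly_Mapping.single (a, b) 1 - Poly_Mapping.single (a, b') 1 \<in> span_gen sA sB A B G"
| smulL: "\<lbrakk>a \<in> A; b \<in> B\<rbrakk> \<Longrightarrow> Poly_Mapping.single (sA c a, b) 1
      - Poly_Mapping.single (a, b) c \<in> span_gen sA sB A B G"
| smulR: "\<lbrakk>a \<in> A; b \<in> B\<rbrakk> \<Longrightarrow> Poly_Mapping.single (a, sB c b) 1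
      - Poly_Mapping.single (a, b) c \<in> span_gen sA sB A B G"
| gen: "g \<in> G \<Longrightarrow> g \<in> span_gen sA sB A B G"
| add: "\<lbrakk>x \<in> span_gen sA sB A B G; y \<in> span_gen sA sB A B G\<rbrakk> \<Longrightarrow> x + y \<in> span_gen sA sB A B G"
| scale: "x \<in> span_gen sA sB A B G \<Longrightarrow> Poly_Mapping.map ((*) c) x \<in> span_gen sA sB A B G"

text \<open>Balancing generators for a tensor product over a subring R (all inside one ring).\<close>
definition bal_gens :: "'a::ring set \<Rightarrow> 'a set \<Rightarrow> 'a set \<Rightarrow> (('a \<times> 'a) \<Rightarrow>\<^sub>0 'k::comm_ring_1) set" where
  "bal_gens A R B = {Poly_Mapping.single (a * r, b) 1 - Poly_Mapping.single (a, r * b) 1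
                     | a r b. a \<in> A \<and> r \<in> R \<and> b \<in> B}"

definition teq2 :: "('k::field \<Rightarrow> 'a::plus \<Rightarrow> 'a) \<Rightarrow> ('k \<Rightarrow> 'b::plus \<Rightarrow> 'b)
    \<Rightarrow> ('a \<times> 'b) list \<Rightarrow> ('a \<times> 'b) list \<Rightarrow> bool" where
  "teq2 sA sB xs ys \<longleftrightarrow> pm_of xs - pm_of ys \<in> span_gen sA sB UNIV UNIV {}"

inductive_set tens3_rel ::
  "('k::field \<Rightarrow> 'a::plus \<Rightarrow> 'a) \<Rightarrow> ('k \<Rightarrow> 'b::plus \<Rightarrow> 'b) \<Rightarrow> ('k \<Rightarrow> 'c::plus \<Rightarrow> 'c)
   \<Rightarrow> (('a \<times> 'b \<times> 'c) \<Rightarrow>\<^sub>0 'k) set"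
  for sA sB sC where
  zero: "0 \<in> tens3_rel sA sB sC"
| add1: "Poly_Mapping.single (a + a', b, c) 1 - Poly_Mapping.single (a, b, c) 1
      - Poly_Mapping.single (a', b, c) 1 \<in> tens3_rel sA sB sC"
| add2: "Poly_Mapping.single (a, b + b', c) 1 - Poly_Mapping.single (a, b, c) 1
      - Poly_Mapping.single (a, b', c) 1 \<in> tens3_rel sA sB sC"
| add3: "Poly_Mapping.single (a, b, c + c') 1 - Poly_Mapping.single (a, b, c) 1
      - Poly_Mapping.single (a, b, c') 1 \<in> tens3_rel sA sB sC"
| smul1: "Poly_Mapping.single (sA k a, b, c) 1 - Poly_Mapping.single (a, b, c) k \<in> tens3_rel sA sB sC"
| smul2: "Poly_Mapping.single (a, sB k b, c) 1 - Poly_Mapping.single (a, b, c) k \<in> tens3_rel sA sB sC"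
| smul3: "Poly_Mapping.single (a, b, sC k c) 1 - Poly_Mapping.single (a, b, c) k \<in> tens3_rel sA sB sC"
| add: "\<lbrakk>x \<in> tens3_rel sA sB sC; y \<in> tens3_rel sA sB sC\<rbrakk> \<Longrightarrow> x + y \<in> tens3_rel sA sB sC"
| scale: "x \<in> tens3_rel sA sB sC \<Longrightarrow> Poly_Mapping.map ((*) k) x \<in> tens3_rel sA sB sC"

definition teq3 :: "('k::field \<Rightarrow> 'a::plus \<Rightarrow> 'a) \<Rightarrow> ('k \<Rightarrow> 'b::plus \<Rightarrow> 'b) \<Rightarrow> ('k \<Rightarrow> 'c::plus \<Rightarrow> 'c)
    \<Rightarrow> ('a \<times> 'b \<times> 'c) list \<Rightarrow> ('a \<times> 'b \<times> 'c) list \<Rightarrow> bool" where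
  "teq3 sA sB sC xs ys \<longleftrightarrow> pm_of xs - pm_of ys \<in> tens3_rel sA sB sC"

definition lift_left :: "('a \<Rightarrow> ('x \<times> 'y) list) \<Rightarrow> ('a \<times> 'b) list \<Rightarrow> ('x \<times> 'y \<times> 'b) list" where
  "lift_left f xs = concat (map (\<lambda>(a, b). map (\<lambda>(x, y). (x, y, b)) (f a)) xs)"

definition lift_right :: "('b \<Rightarrow> ('x \<times> 'y) list) \<Rightarrow> ('a \<times> 'b) list \<Rightarrow> ('a \<times> 'x \<times> 'y) list" where
  "lift_right f xs = concat (map (\<lambda>(a, b). map (\<lambda>(x, y). (a, x, y)) (f b)) xs)"

definition tmult :: "('a::times \<times> 'b::times) list \<Rightarrow> ('a \<times> 'b) list \<Rightarrow> ('a \<times> 'b) list" where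
  "tmult xs ys = concat (map (\<lambda>(a, b). map (\<lambda>(c, d). (a * c, b * d)) ys) xs)"

definition k_algebra :: "('k::field \<Rightarrow> 'a::ring_1 \<Rightarrow> 'a) \<Rightarrow> bool" where
  "k_algebra s \<longleftrightarrow> Vector_Spaces.vector_space s \<and>
     (\<forall>c x y. s c (x * y) = s c x * y \<and> s c (x * y) = x * s c y)"

definition hopf_algebra :: "('k::field \<Rightarrow> 'h::ring_1 \<Rightarrow> 'h) \<Rightarrow> ('h \<Rightarrow> ('h \<times> 'h) list)
    \<Rightarrow> ('h \<Rightarrow> 'k) \<Rightarrow> ('h \<Rightarrow> 'h) \<Rightarrow> bool" where
  "hopf_algebra sH cop eps S \<longleftrightarrow>
     k_algebra sH
   \<comment> \<open>coproduct: linear, algebra map, coassociative\<close>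
   \<and> (\<forall>x y. teq2 sH sH (cop (x + y)) (cop x @ cop y))
   \<and> (\<forall>c x. teq2 sH sH (cop (sH c x)) (map (\<lambda>(a, b). (sH c a, b)) (cop x)))
   \<and> (\<forall>x y. teq2 sH sH (cop (x * y)) (tmult (cop x) (cop y)))
   \<and> teq2 sH sH (cop 1) [(1, 1)]
   \<and> (\<forall>x. teq3 sH sH sH (lift_left cop (cop x)) (lift_right cop (cop x)))
   \<comment> \<open>counit: linear, algebra map, counit axioms\<close>
   \<and> (\<forall>x y. eps (x + y) = eps x + eps y) \<and> (\<forall>c x. eps (sH c x) = c * eps x)
   \<and> (\<forall>x y. eps (x * y) = eps x * eps y) \<and> eps 1 = 1
   \<and> (\<forall>x. sum_list (map (\<lambda>(a, b). sH (eps a) b) (cop x)) = x)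
   \<and> (\<forall>x. sum_list (map (\<lambda>(a, b). sH (eps b) a) (cop x)) = x)
   \<comment> \<open>antipode: linear, antipode axioms\<close>
   \<and> (\<forall>x y. S (x + y) = S x + S y) \<and> (\<forall>c x. S (sH c x) = sH c (S x))
   \<and> (\<forall>x. sum_list (map (\<lambda>(a, b). S a * b) (cop x)) = sH (eps x) 1)
   \<and> (\<forall>x. sum_list (map (\<lambda>(a, b). a * S b) (cop x)) = sH (eps x) 1)"

definition right_comodule_algebra :: "('k::field \<Rightarrow> 'p::ring_1 \<Rightarrow> 'p) \<Rightarrow> ('k \<Rightarrow> 'h::ring_1 \<Rightarrow> 'h)
    \<Rightarrow> ('h \<Rightarrow> ('h \<times> 'h) list) \<Rightarrow> ('h \<Rightarrow> 'k) \<Rightarrow> ('p \<Rightarrow> ('p \<times> 'h) list) \<Rightarrow> bool" where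
  "right_comodule_algebra sP sH cop eps DR \<longleftrightarrow>
     k_algebra sP
   \<and> (\<forall>x y. teq2 sP sH (DR (x + y)) (DR x @ DR y))
   \<and> (\<forall>c x. teq2 sP sH (DR (sP c x)) (map (\<lambda>(a, g). (sP c a, g)) (DR x)))
   \<and> (\<forall>x. teq3 sP sH sH (lift_left DR (DR x)) (lift_right cop (DR x)))
   \<and> (\<forall>x. sum_list (map (\<lambda>(a, g). sP (eps g) a) (DR x)) = x)
   \<and> (\<forall>x y. teq2 sP sH (DR (x * y)) (tmult (DR x) (DR y)))
   \<and> teq2 sP sH (DR 1) [(1, 1)]"

definition coinv :: "('k::field \<Rightarrow> 'p::ring_1 \<Rightarrow> 'p) \<Rightarrow> ('k \<Rightarrow> 'h::ring_1 \<Rightarrow> 'h)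
    \<Rightarrow> ('p \<Rightarrow> ('p \<times> 'h) list) \<Rightarrow> 'p set" where
  "coinv sP sH DR = {p. teq2 sP sH (DR p) [(p, 1)]}"

definition can_map :: "('p::ring_1 \<Rightarrow> ('p \<times> 'h) list) \<Rightarrow> ('p \<times> 'p) list \<Rightarrow> ('p \<times> 'h) list" where
  "can_map DR xs = concat (map (\<lambda>(p, q). map (\<lambda>(a, g). (p * a, g)) (DR q)) xs)"

definition teqM :: "('k::field \<Rightarrow> 'p::ring_1 \<Rightarrow> 'p) \<Rightarrow> 'p set \<Rightarrow> ('p \<times> 'p) list \<Rightarrow> ('p \<times> 'p) list \<Rightarrow> bool" where
  "teqM sP M xs ys \<longleftrightarrow> pm_of xs - pm_of ys \<in> span_gen sP sP UNIV UNIV (bal_gens UNIV M UNIV)"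

definition galois :: "('k::field \<Rightarrow> 'p::ring_1 \<Rightarrow> 'p) \<Rightarrow> ('k \<Rightarrow> 'h::ring_1 \<Rightarrow> 'h)
    \<Rightarrow> ('p \<Rightarrow> ('p \<times> 'h) list) \<Rightarrow> bool" where
  "galois sP sH DR \<longleftrightarrow>
     (\<forall>xs ys. teq2 sP sH (can_map DR xs) (can_map DR ys) \<longrightarrow> teqM sP (coinv sP sH DR) xs ys)
   \<and> (\<forall>zs. \<exists>xs. teq2 sP sH (can_map DR xs) zs)"

section \<open>Flatness (ideal criterion)\<close>

definition right_ideal_of :: "'p::ring_1 set \<Rightarrow> 'p set \<Rightarrow> bool" where
  "right_ideal_of M I \<longleftrightarrow> I \<subseteq> M \<and> 0 \<in> I \<and> (\<forall>x\<in>I. \<forall>y\<in>I. x + y \<in> I) \<and> (\<forall>x\<in>I. - x \<in> I)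
     \<and> (\<forall>x\<in>I. \<forall>r\<in>M. x * r \<in> I)"

definition left_ideal_of :: "'p::ring_1 set \<Rightarrow> 'p set \<Rightarrow> bool" where
  "left_ideal_of M I \<longleftrightarrow> I \<subseteq> M \<and> 0 \<in> I \<and> (\<forall>x\<in>I. \<forall>y\<in>I. x + y \<in> I) \<and> (\<forall>x\<in>I. - x \<in> I)
     \<and> (\<forall>x\<in>I. \<forall>r\<in>M. r * x \<in> I)"

text \<open>P is flat as a left M-module: for every right ideal I of M, I (x)_M P \<rightarrow> P is injective.\<close>
definition flat_left :: "('k::field \<Rightarrow> 'p::ring_1 \<Rightarrow> 'p) \<Rightarrow> 'p set \<Rightarrow> bool" where
  "flat_left sP M \<longleftrightarrow> (\<forall>I xs. right_ideal_of M I \<longrightarrow> set xs \<subseteq> I \<times> UNIV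
      \<longrightarrow> sum_list (map (\<lambda>(m, p). m * p) xs) = 0
      \<longrightarrow> pm_of xs \<in> span_gen sP sP I UNIV (bal_gens I M UNIV))"

text \<open>P is flat as a right M-module: for every left ideal J of M, P (x)_M J \<rightarrow> P is injective.\<close>
definition flat_right :: "('k::field \<Rightarrow> 'p::ring_1 \<Rightarrow> 'p) \<Rightarrow> 'p set \<Rightarrow> bool" where
  "flat_right sP M \<longleftrightarrow> (\<forall>J xs. left_ideal_of M J \<longrightarrow> set xs \<subseteq> UNIV \<times> J
      \<longrightarrow> sum_list (map (\<lambda>(p, m). p * m) xs) = 0
      \<longrightarrow> pm_of xs \<in> span_gen sP sP UNIV J (bal_gens UNIV M J))"

definition qpb :: "('k::field \<Rightarrow> 'p::ring_1 \<Rightarrow> 'p) \<Rightarrow> ('k \<Rightarrow> 'h::ring_1 \<Rightarrow> 'h)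
    \<Rightarrow> ('h \<Rightarrow> ('h \<times> 'h) list) \<Rightarrow> ('h \<Rightarrow> 'k) \<Rightarrow> ('h \<Rightarrow> 'h) \<Rightarrow> ('p \<Rightarrow> ('p \<times> 'h) list) \<Rightarrow> bool" where
  "qpb sP sH cop eps S DR \<longleftrightarrow>
     hopf_algebra sH cop eps S \<and> bij S
   \<and> right_comodule_algebra sP sH cop eps DR
   \<and> flat_left sP (coinv sP sH DR) \<and> flat_right sP (coinv sP sH DR)
   \<and> galois sP sH DR"

definition coact2 :: "('p::ring_1 \<Rightarrow> ('p \<times> 'h::ring_1) list) \<Rightarrow> ('p \<times> 'p) list \<Rightarrow> ('p \<times> 'p \<times> 'h) list" where
  "coact2 DR xs = concat (map (\<lambda>(a, b). concat (map (\<lambda>(x, g).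
       map (\<lambda>(y, g'). (x, y, g * g')) (DR b)) (DR a))) xs)"

definition connection :: "('k::field \<Rightarrow> 'p::ring_1 \<Rightarrow> 'p) \<Rightarrow> ('k \<Rightarrow> 'h::ring_1 \<Rightarrow> 'h)
    \<Rightarrow> ('h \<Rightarrow> ('h \<times> 'h) list) \<Rightarrow> ('h \<Rightarrow> 'k) \<Rightarrow> ('h \<Rightarrow> 'h) \<Rightarrow> ('p \<Rightarrow> ('p \<times> 'h) list)
    \<Rightarrow> ('h \<Rightarrow> ('p \<times> 'p) list) \<Rightarrow> bool" where
  "connection sP sH cop eps S DR \<omega> \<longleftrightarrow>
     (\<forall>x y. teq2 sP sP (\<omega> (x + y)) (\<omega> x @ \<omega> y))
   \<and> (\<forall>c x. teq2 sP sP (\<omega> (sH c x)) (map (\<lambda>(a, b). (sP c a, b)) (\<omega> x)))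
   \<and> (\<forall>h. sum_list (map (\<lambda>(a, b). a * b) (\<omega> h)) = 0)
   \<and> teq2 sP sP (\<omega> 1) []
   \<and> (\<forall>h. teq2 sP sH (can_map DR (\<omega> h)) [(1, h - sH (eps h) 1)])
   \<and> (\<forall>h. teq3 sP sP sH (coact2 DR (\<omega> h))
          (concat (map (\<lambda>(h1, h2, h3). map (\<lambda>(a, b). (a, b, S h1 * h3)) (\<omega> h2))
             (lift_left cop (cop h)))))"

definition dP :: "'p::ring_1 \<Rightarrow> ('p \<times> 'p) list" where
  "dP p = [(1, p), (- p, 1)]"

definition tneg :: "('a::uminus \<times> 'b) list \<Rightarrow> ('a \<times> 'b) list" where
  "tneg xs = map (\<lambda>(a, b). (- a, b)) xs"

definition Pi_om :: "('p::ring_1 \<Rightarrow> ('p \<times> 'h) list) \<Rightarrow> ('h \<Rightarrow> ('p \<times> 'p) list)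
    \<Rightarrow> ('p \<times> 'p) list \<Rightarrow> ('p \<times> 'p) list" where
  "Pi_om DR \<omega> xs = concat (map (\<lambda>(p, q). concat (map (\<lambda>(x, g).
       map (\<lambda>(a, b). (p * x * a, b)) (\<omega> g)) (DR q))) xs)"

definition DL :: "('h \<Rightarrow> 'h) \<Rightarrow> ('p \<Rightarrow> ('p \<times> 'h) list) \<Rightarrow> 'p \<Rightarrow> ('h \<times> 'p) list" where
  "DL S DR p = map (\<lambda>(x, g). (inv S g, x)) (DR p)"

definition Pibar_om :: "('h \<Rightarrow> 'h) \<Rightarrow> ('p::ring_1 \<Rightarrow> ('p \<times> 'h) list) \<Rightarrow> ('h \<Rightarrow> ('p \<times> 'p) list)
    \<Rightarrow> ('p \<times> 'p) list \<Rightarrow> ('p \<times> 'p) list" where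
  "Pibar_om S DR \<omega> xs = concat (map (\<lambda>(p, q). concat (map (\<lambda>(g, x).
       map (\<lambda>(a, b). (a, b * x * q)) (\<omega> g)) (DL S DR p))) xs)"

text \<open>Membership in (Omega^1 M) P and P (Omega^1 M) inside Omega^1 P \<subseteq> P (x) P.\<close>
definition in_OmM_P :: "('k::field \<Rightarrow> 'p::ring_1 \<Rightarrow> 'p) \<Rightarrow> 'p set \<Rightarrow> ('p \<times> 'p) list \<Rightarrow> bool" where
  "in_OmM_P sP M t \<longleftrightarrow> (\<exists>ys :: (('p \<times> 'p) list \<times> 'p) list.
      (\<forall>(\<xi>, q) \<in> set ys. set \<xi> \<subseteq> M \<times> M \<and> sum_list (map (\<lambda>(m, n). m * n) \<xi>) = 0)
    \<and> teq2 sP sP t (concat (map (\<lambda>(\<xi>, q). map (\<lambda>(m, n). (m, n * q)) \<xi>) ys)))"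

definition in_P_OmM :: "('k::field \<Rightarrow> 'p::ring_1 \<Rightarrow> 'p) \<Rightarrow> 'p set \<Rightarrow> ('p \<times> 'p) list \<Rightarrow> bool" where
  "in_P_OmM sP M t \<longleftrightarrow> (\<exists>ys :: ('p \<times> ('p \<times> 'p) list) list.
      (\<forall>(q, \<xi>) \<in> set ys. set \<xi> \<subseteq> M \<times> M \<and> sum_list (map (\<lambda>(m, n). m * n) \<xi>) = 0)
    \<and> teq2 sP sP t (concat (map (\<lambda>(q, \<xi>). map (\<lambda>(m, n). (q * m, n)) \<xi>) ys)))"

definition left_strong :: "('k::field \<Rightarrow> 'p::ring_1 \<Rightarrow> 'p) \<Rightarrow> ('k \<Rightarrow> 'h::ring_1 \<Rightarrow> 'h)
    \<Rightarrow> ('p \<Rightarrow> ('p \<times> 'h) list) \<Rightarrow> ('h \<Rightarrow> ('p \<times> 'p) list) \<Rightarrow> bool" where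
  "left_strong sP sH DR \<omega> \<longleftrightarrow>
     (\<forall>p. in_OmM_P sP (coinv sP sH DR) (dP p @ tneg (Pi_om DR \<omega> (dP p))))"

end

theory Submission
  imports Defs
begin


definition lin :: "('k::field \<Rightarrow> 'a::plus \<Rightarrow> 'a) \<Rightarrow> ('a \<Rightarrow> 'k) \<Rightarrow> bool" where
  "lin s f \<longleftrightarrow> (\<forall>x y. f (x + y) = f x + f y) \<and> (\<forall>c x. f (s c x) = c * f x)"

definition bil :: "('k::field \<Rightarrow> 'a::plus \<Rightarrow> 'a) \<Rightarrow> ('k \<Rightarrow> 'b::plus \<Rightarrow> 'b) \<Rightarrow> ('a \<Rightarrow> 'b \<Rightarrow> 'k) \<Rightarrow> bool" where
  "bil s1 s2 f \<longleftrightarrow> (\<forall>b. lin s1 (\<lambda>a. f a b)) \<and> (\<forall>a. lin s2 (f a))"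

definition tri :: "('k::field \<Rightarrow> 'a::plus \<Rightarrow> 'a) \<Rightarrow> ('k \<Rightarrow> 'b::plus \<Rightarrow> 'b) \<Rightarrow> ('k \<Rightarrow> 'c::plus \<Rightarrow> 'c)
   \<Rightarrow> ('a \<Rightarrow> 'b \<Rightarrow> 'c \<Rightarrow> 'k) \<Rightarrow> bool" where
  "tri s1 s2 s3 f \<longleftrightarrow> (\<forall>b c. lin s1 (\<lambda>a. f a b c)) \<and> (\<forall>a c. lin s2 (\<lambda>b. f a b c)) \<and> (\<forall>a b. lin s3 (f a b))"

definition S2 :: "('a \<times> 'b) list \<Rightarrow> ('a \<Rightarrow> 'b \<Rightarrow> 'k::comm_monoid_add) \<Rightarrow> 'k" where
  "S2 xs f = sum_list (map (\<lambda>(a, b). f a b) xs)"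

definition S3 :: "('a \<times> 'b \<times> 'c) list \<Rightarrow> ('a \<Rightarrow> 'b \<Rightarrow> 'c \<Rightarrow> 'k::comm_monoid_add) \<Rightarrow> 'k" where
  "S3 xs f = sum_list (map (\<lambda>(a, b, c). f a b c) xs)"

section \<open>Evaluation of formal sums\<close>

definition ev :: "('z \<Rightarrow> 'k::field) \<Rightarrow> ('z \<Rightarrow>\<^sub>0 'k) \<Rightarrow> 'k" where
  "ev f x = (\<Sum>z\<in>Poly_Mapping.keys x. Poly_Mapping.lookup x z * f z)"

lemma lookup_map_mult: "Poly_Mapping.lookup (Poly_Mapping.map ((*) (c::'k::field)) x) z = c * Poly_Mapping.lookup x z"
  by (simp add: Poly_Mapping.map.rep_eq when_def)

lemma map_mult_0[simp]: "Poly_Mapping.map ((*) (c::'k::field)) 0 = 0"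
  by (rule poly_mapping_eqI) (simp add: lookup_map_mult)

lemma ev_superset: "finite A \<Longrightarrow> Poly_Mapping.keys x \<subseteq> A \<Longrightarrow> ev f x = (\<Sum>z\<in>A. Poly_Mapping.lookup x z * f z)"
  unfolding ev_def by (rule sum.mono_neutral_left) (auto simp: in_keys_iff)

lemma ev_add: "ev f (x + y) = ev f x + ev f y"
proof -
  let ?A = "Poly_Mapping.keys x \<union> Poly_Mapping.keys y \<union> Poly_Mapping.keys (x + y)"
  have "ev f (x + y) = (\<Sum>z\<in>?A. Poly_Mapping.lookup (x + y) z * f z)" by (rule ev_superset) auto
  also have "\<dots> = (\<Sum>z\<in>?A. Poly_Mapping.lookup x z * f z) + (\<Sum>z\<in>?A. Poly_Mapping.lookup y z * f z)"
    by (simp add: lookup_add distrib_right sum.distrib)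
  also have "\<dots> = ev f x + ev f y" by (subst (1 2) ev_superset[of ?A]) auto
  finally show ?thesis .
qed

lemma ev_zero[simp]: "ev f 0 = 0" by (simp add: ev_def)

lemma ev_diff: "ev f (x - y) = ev f x - ev f y"
  using ev_add[of f "x - y" y] by simp

lemma ev_single: "ev f (Poly_Mapping.single z c) = c * f z"
  by (subst ev_superset[of "{z}"]) (auto simp: lookup_single)

lemma ev_map: "ev f (Poly_Mapping.map ((*) c) x) = c * ev f x"
  by (subst (1 2) ev_superset[of "Poly_Mapping.keys x"]) (auto simp: lookup_map_mult sum_distrib_left in_keys_iff mult.assoc)

lemma ev_pm_of: "ev f (pm_of xs) = sum_list (map f xs)"
  by (induction xs) (auto simp: pm_of_def ev_add ev_single)

lemma pm_of_append: "pm_of (xs @ ys) = pm_of xs + pm_of ys"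
  by (simp add: pm_of_def)

lemma ev_span_gen:
  assumes "d \<in> span_gen sA sB UNIV UNIV {}" "bil sA sB f"
  shows "ev (\<lambda>(a, b). f a b) d = 0"
  using assms(1)
proof (induction rule: span_gen.induct)
  case (addL a a' b) then show ?case using assms(2) by (simp add: ev_diff ev_single bil_def lin_def)
next
  case (addR a b b') then show ?case using assms(2) by (simp add: ev_diff ev_single bil_def lin_def)
next
  case (smulL a b c) then show ?case using assms(2) by (simp add: ev_diff ev_single bil_def lin_def)
next
  case (smulR a b c) then show ?case using assms(2) by (simp add: ev_diff ev_single bil_def lin_def)
qed (auto simp: ev_add ev_map)

lemma ev_tens3:
  assumes "d \<in> tens3_rel sA sB sC" "tri sA sB sC f"
  shows "ev (\<lambda>(a, b, c). f a b c) d = 0"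
  using assms(1)
proof (induction rule: tens3_rel.induct)
qed (use assms(2) in \<open>auto simp: ev_add ev_map ev_diff ev_single tri_def lin_def\<close>)

section \<open>Separation\<close>

lemma vs_self: "vector_space ((*) :: 'k::field \<Rightarrow> 'k \<Rightarrow> 'k)"
  by (simp add: vector_space_def algebra_simps)

lemma vs_pm: "vector_space (\<lambda>c (x :: 'z \<Rightarrow>\<^sub>0 'k::field). Poly_Mapping.map ((*) c) x)"
  unfolding vector_space_def
  by (auto intro!: poly_mapping_eqI simp: lookup_map_mult lookup_add algebra_simps)

lemma sep_subspace:
  fixes s :: "'k::field \<Rightarrow> 'v::ab_group_add \<Rightarrow> 'v"
  assumes vs: "vector_space s" and W: "module.subspace s W" and d: "d \<notin> W"
  shows "\<exists>\<phi>. lin s \<phi> \<and> (\<forall>w\<in>W. \<phi> w = 0) \<and> \<phi> d = 1"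
proof -
  interpret V: vector_space s by (rule vs)
  interpret VP: vector_space_pair s "(*) :: 'k \<Rightarrow> 'k \<Rightarrow> 'k"
    by (simp add: vector_space_pair_def vs vs_self)
  obtain B where B: "B \<subseteq> W" "V.independent B" "W \<subseteq> V.span B"
    using V.maximal_independent_subset by blast
  have sB: "V.span B \<subseteq> W" using B(1) W V.span_minimal by blast
  have "d \<notin> V.span B" using sB d by blast
  then have ind: "V.independent (insert d B)" using B(2) V.independent_insertI by blast
  obtain g where g: "Vector_Spaces.linear s (*) g" "\<forall>x\<in>insert d B. g x = (if x = d then 1 else 0)"
    using VP.linear_independent_extend[OF ind, where f="\<lambda>x. if x = d then 1 else 0"] by blast
  have dB: "d \<notin> B" using B(1) d by blast
  have g0: "\<forall>w\<in>W. g w = 0"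
  proof
    fix w assume "w \<in> W"
    then have "w \<in> V.span B" using B(3) by blast
    moreover have "\<And>x. x \<in> B \<Longrightarrow> g x = 0" using g(2) dB by auto
    ultimately show "g w = 0" using VP.linear_eq_0_on_span[OF g(1)] by blast
  qed
  have "lin s g" using g(1) unfolding lin_def by (simp add: Vector_Spaces.linear_iff)
  then show ?thesis using g0 g(2) by auto
qed

lemma teq2_sem:
  fixes sA :: "'k::field \<Rightarrow> 'a::plus \<Rightarrow> 'a" and sB :: "'k \<Rightarrow> 'b::plus \<Rightarrow> 'b"
  shows "teq2 sA sB xs ys \<longleftrightarrow> (\<forall>f. bil sA sB f \<longrightarrow> S2 xs f = S2 ys f)"
proof
  assume "teq2 sA sB xs ys"
  then show "\<forall>f. bil sA sB f \<longrightarrow> S2 xs f = S2 ys f"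
    using ev_span_gen by (fastforce simp: teq2_def S2_def ev_diff ev_pm_of)
next
  assume H: "\<forall>f. bil sA sB f \<longrightarrow> S2 xs f = S2 ys f"
  let ?sc = "\<lambda>c (x :: ('a \<times> 'b) \<Rightarrow>\<^sub>0 'k). Poly_Mapping.map ((*) c) x"
  let ?W = "span_gen sA sB UNIV UNIV {}"
  have sub: "module.subspace ?sc ?W"
    using vs_pm unfolding module.subspace_def[OF vs_pm[unfolded module_iff_vector_space[symmetric]]]
    by (auto intro: span_gen.intros)
  show "teq2 sA sB xs ys"
  proof (rule ccontr)
    assume "\<not> teq2 sA sB xs ys"
    then have "pm_of xs - pm_of ys \<notin> ?W" by (simp add: teq2_def)
    from sep_subspace[OF vs_pm sub this] obtain \<phi> where
      phi: "lin ?sc \<phi>" "\<forall>w\<in>?W. \<phi> w = 0" "\<phi> (pm_of xs - pm_of ys) = 1" by blast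
    define f where "f a b = \<phi> (Poly_Mapping.single (a, b) 1)" for a b
    have phadd: "\<phi> (x + y) = \<phi> x + \<phi> y" for x y using phi(1) by (simp add: lin_def)
    have phsc: "\<phi> (?sc c x) = c * \<phi> x" for c x using phi(1) by (simp add: lin_def)
    have phdiff: "\<phi> (x - y) = \<phi> x - \<phi> y" for x y using phadd[of "x - y" y] by simp
    have phsingle: "\<phi> (Poly_Mapping.single z c) = c * \<phi> (Poly_Mapping.single z 1)" for z c
      using phsc[of c "Poly_Mapping.single z 1"] by simp
    have ph0: "\<phi> 0 = 0" using phsc[of 0 0] by simp
    have "bil sA sB f"
      unfolding bil_def lin_def f_def
    proof (intro conjI allI)
      fix a a' b
      have "\<phi> (Poly_Mapping.single (a + a', b) 1 - Poly_Mapping.single (a, b) 1 - Poly_Mapping.single (a', b) 1) = 0"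
        using phi(2) by (auto intro: span_gen.intros)
      then show "\<phi> (Poly_Mapping.single (a + a', b) 1) = \<phi> (Poly_Mapping.single (a, b) 1) + \<phi> (Poly_Mapping.single (a', b) 1)"
        by (simp add: phdiff) (metis add.commute diff_eq_eq)
    next
      fix c a b
      have "\<phi> (Poly_Mapping.single (sA c a, b) 1 - Poly_Mapping.single (a, b) c) = 0"
        using phi(2) by (auto intro: span_gen.intros)
      then show "\<phi> (Poly_Mapping.single (sA c a, b) 1) = c * \<phi> (Poly_Mapping.single (a, b) 1)"
        by (simp add: phdiff phsingle[of _ c])
    next
      fix a b b'
      have "\<phi> (Poly_Mapping.single (a, b + b') 1 - Poly_Mapping.single (a, b) 1 - Poly_Mapping.single (a, b') 1) = 0"
        using phi(2) by (auto intro: span_gen.intros)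
      then show "\<phi> (Poly_Mapping.single (a, b + b') 1) = \<phi> (Poly_Mapping.single (a, b) 1) + \<phi> (Poly_Mapping.single (a, b') 1)"
        by (simp add: phdiff) (metis add.commute diff_eq_eq)
    next
      fix a c b
      have "\<phi> (Poly_Mapping.single (a, sB c b) 1 - Poly_Mapping.single (a, b) c) = 0"
        using phi(2) by (auto intro: span_gen.intros)
      then show "\<phi> (Poly_Mapping.single (a, sB c b) 1) = c * \<phi> (Poly_Mapping.single (a, b) 1)"
        by (simp add: phdiff phsingle[of _ c])
    qed
    then have "S2 xs f = S2 ys f" using H by blast
    moreover have "S2 zs f = \<phi> (pm_of zs)" for zs
      by (induction zs) (auto simp: S2_def f_def pm_of_def phadd ph0)
    ultimately show False using phi(3) phdiff by simp
  qed
qed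

lemma ev_pm_of3: "ev (\<lambda>(a, b, c). f a b c) (pm_of xs) = S3 xs f"
  by (simp add: ev_pm_of S3_def)

lemma teq3_sem:
  fixes sA :: "'k::field \<Rightarrow> 'a::plus \<Rightarrow> 'a" and sB :: "'k \<Rightarrow> 'b::plus \<Rightarrow> 'b" and sC :: "'k \<Rightarrow> 'c::plus \<Rightarrow> 'c"
  shows "teq3 sA sB sC xs ys \<longleftrightarrow> (\<forall>f. tri sA sB sC f \<longrightarrow> S3 xs f = S3 ys f)"
proof
  assume "teq3 sA sB sC xs ys"
  then show "\<forall>f. tri sA sB sC f \<longrightarrow> S3 xs f = S3 ys f"
    using ev_tens3 by (fastforce simp: teq3_def ev_diff ev_pm_of3[symmetric])
next
  assume H: "\<forall>f. tri sA sB sC f \<longrightarrow> S3 xs f = S3 ys f"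
  let ?sc = "\<lambda>c (x :: ('a \<times> 'b \<times> 'c) \<Rightarrow>\<^sub>0 'k). Poly_Mapping.map ((*) c) x"
  let ?W = "tens3_rel sA sB sC"
  have sub: "module.subspace ?sc ?W"
    using vs_pm unfolding module.subspace_def[OF vs_pm[unfolded module_iff_vector_space[symmetric]]]
    by (auto intro: tens3_rel.intros)
  show "teq3 sA sB sC xs ys"
  proof (rule ccontr)
    assume "\<not> teq3 sA sB sC xs ys"
    then have "pm_of xs - pm_of ys \<notin> ?W" by (simp add: teq3_def)
    from sep_subspace[OF vs_pm sub this] obtain \<phi> where
      phi: "lin ?sc \<phi>" "\<forall>w\<in>?W. \<phi> w = 0" "\<phi> (pm_of xs - pm_of ys) = 1" by blast
    define f where "f a b c = \<phi> (Poly_Mapping.single (a, b, c) 1)" for a b c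
    have phadd: "\<phi> (x + y) = \<phi> x + \<phi> y" for x y using phi(1) by (simp add: lin_def)
    have phsc: "\<phi> (?sc c x) = c * \<phi> x" for c x using phi(1) by (simp add: lin_def)
    have phdiff: "\<phi> (x - y) = \<phi> x - \<phi> y" for x y using phadd[of "x - y" y] by simp
    have phsingle: "\<phi> (Poly_Mapping.single z c) = c * \<phi> (Poly_Mapping.single z 1)" for z c
      using phsc[of c "Poly_Mapping.single z 1"] by simp
    have ph0: "\<phi> 0 = 0" using phsc[of 0 0] by simp
    have "tri sA sB sC f"
      unfolding tri_def lin_def f_def
    proof (intro conjI allI)
      fix a a' b c
      have "\<phi> (Poly_Mapping.single (a + a', b, c) 1 - Poly_Mapping.single (a, b, c) 1 - Poly_Mapping.single (a', b, c) 1) = 0"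
        using phi(2) by (auto intro: tens3_rel.intros)
      then show "\<phi> (Poly_Mapping.single (a + a', b, c) 1) = \<phi> (Poly_Mapping.single (a, b, c) 1) + \<phi> (Poly_Mapping.single (a', b, c) 1)"
        by (simp add: phdiff) (metis add.commute diff_eq_eq)
    next
      fix k a b c
      have "\<phi> (Poly_Mapping.single (sA k a, b, c) 1 - Poly_Mapping.single (a, b, c) k) = 0"
        using phi(2) by (auto intro: tens3_rel.intros)
      then show "\<phi> (Poly_Mapping.single (sA k a, b, c) 1) = k * \<phi> (Poly_Mapping.single (a, b, c) 1)"
        by (simp add: phdiff phsingle[of _ k])
    next
      fix a b b' c
      have "\<phi> (Poly_Mapping.single (a, b + b', c) 1 - Poly_Mapping.single (a, b, c) 1 - Poly_Mapping.single (a, b', c) 1) = 0"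
        using phi(2) by (auto intro: tens3_rel.intros)
      then show "\<phi> (Poly_Mapping.single (a, b + b', c) 1) = \<phi> (Poly_Mapping.single (a, b, c) 1) + \<phi> (Poly_Mapping.single (a, b', c) 1)"
        by (simp add: phdiff) (metis add.commute diff_eq_eq)
    next
      fix k a b c
      have "\<phi> (Poly_Mapping.single (a, sB k b, c) 1 - Poly_Mapping.single (a, b, c) k) = 0"
        using phi(2) by (auto intro: tens3_rel.intros)
      then show "\<phi> (Poly_Mapping.single (a, sB k b, c) 1) = k * \<phi> (Poly_Mapping.single (a, b, c) 1)"
        by (simp add: phdiff phsingle[of _ k])
    next
      fix a b c c'
      have "\<phi> (Poly_Mapping.single (a, b, c + c') 1 - Poly_Mapping.single (a, b, c) 1 - Poly_Mapping.single (a, b, c') 1) = 0"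
        using phi(2) by (auto intro: tens3_rel.intros)
      then show "\<phi> (Poly_Mapping.single (a, b, c + c') 1) = \<phi> (Poly_Mapping.single (a, b, c) 1) + \<phi> (Poly_Mapping.single (a, b, c') 1)"
        by (simp add: phdiff) (metis add.commute diff_eq_eq)
    next
      fix k a b c
      have "\<phi> (Poly_Mapping.single (a, b, sC k c) 1 - Poly_Mapping.single (a, b, c) k) = 0"
        using phi(2) by (auto intro: tens3_rel.intros)
      then show "\<phi> (Poly_Mapping.single (a, b, sC k c) 1) = k * \<phi> (Poly_Mapping.single (a, b, c) 1)"
        by (simp add: phdiff phsingle[of _ k])
    qed
    then have "S3 xs f = S3 ys f" using H by blast
    moreover have "S3 zs f = \<phi> (pm_of zs)" for zs
      by (induction zs) (auto simp: S3_def f_def pm_of_def phadd ph0)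
    ultimately show False using phi(3) phdiff by simp
  qed
qed

lemma vec_eq_sem:
  fixes s :: "'k::field \<Rightarrow> 'v::ab_group_add \<Rightarrow> 'v"
  assumes vs: "vector_space s" and H: "\<And>\<phi>. lin s \<phi> \<Longrightarrow> \<phi> x = \<phi> y"
  shows "x = y"
proof (rule ccontr)
  assume "x \<noteq> y"
  then have "x - y \<notin> {0}" by simp
  moreover have "module.subspace s {0}"
    using vs by (simp add: module.subspace_single_0 module_iff_vector_space)
  ultimately obtain \<phi> where "lin s \<phi>" "\<phi> (x - y) = 1" "\<phi> 0 = 0"
    using sep_subspace[OF vs] by blast
  moreover have "\<phi> (x - y) = \<phi> x - \<phi> y" using \<open>lin s \<phi>\<close> unfolding lin_def
    by (metis add_diff_cancel diff_add_cancel)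
  ultimately show False using H[of \<phi>] by simp
qed

lemma S2_Nil[simp]: "S2 [] F = 0" by (simp add: S2_def)
lemma S2_Cons[simp]: "S2 ((a, b) # xs) F = F a b + S2 xs F" by (simp add: S2_def)
lemma S2_append[simp]: "S2 (xs @ ys) F = S2 xs F + S2 ys F" by (simp add: S2_def)
lemma S3_Nil[simp]: "S3 [] F = 0" by (simp add: S3_def)
lemma S3_Cons[simp]: "S3 ((a, b, c) # xs) F = F a b c + S3 xs F" by (simp add: S3_def)
lemma S3_append[simp]: "S3 (xs @ ys) F = S3 xs F + S3 ys F" by (simp add: S3_def)

lemma S2_concat_map2[simp]: "S2 (concat (map (\<lambda>(a, b). g a b) xs)) F = S2 xs (\<lambda>a b. S2 (g a b) F)"
  by (induction xs) auto
lemma S2_concat_map3[simp]: "S2 (concat (map (\<lambda>(a, b, c). g a b c) xs)) F = S3 xs (\<lambda>a b c. S2 (g a b c) F)"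
  by (induction xs) auto
lemma S3_concat_map2[simp]: "S3 (concat (map (\<lambda>(a, b). g a b) xs)) F = S2 xs (\<lambda>a b. S3 (g a b) F)"
  by (induction xs) auto
lemma S3_concat_map3[simp]: "S3 (concat (map (\<lambda>(a, b, c). g a b c) xs)) F = S3 xs (\<lambda>a b c. S3 (g a b c) F)"
  by (induction xs) auto
lemma S2_map2[simp]: "S2 (map (\<lambda>(a, b). (f a b, g a b)) xs) F = S2 xs (\<lambda>a b. F (f a b) (g a b))"
  by (induction xs) auto
lemma S3_map2[simp]: "S3 (map (\<lambda>(a, b). (f a b, g a b, h a b)) xs) F = S2 xs (\<lambda>a b. F (f a b) (g a b) (h a b))"
  by (induction xs) auto

lemma S3_lift_left[simp]: "S3 (lift_left f xs) G = S2 xs (\<lambda>a b. S2 (f a) (\<lambda>x y. G x y b))"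
  by (simp add: lift_left_def)
lemma S3_map_Pair[simp]: "S3 (map (Pair a) ys) G = S2 ys (G a)"
  by (induction ys) auto

lemma S3_lift_right[simp]: "S3 (lift_right f xs) G = S2 xs (\<lambda>a b. S2 (f b) (\<lambda>x y. G a x y))"
  by (simp add: lift_right_def)

lemma S2_add_fun[simp]: "S2 xs (\<lambda>a b. F a b + G a b) = S2 xs F + S2 xs G"
  by (induction xs) (auto simp: algebra_simps)
lemma S2_mult_fun[simp]: "S2 xs (\<lambda>a b. (c::'k::comm_ring) * F a b) = c * S2 xs F"
  by (induction xs) (auto simp: algebra_simps)
lemma S2_mult_fun2[simp]: "S2 xs (\<lambda>a b. F a b * (c::'k::comm_ring)) = S2 xs F * c"
  by (induction xs) (auto simp: algebra_simps)
lemma S2_zero_fun[simp]: "S2 xs (\<lambda>a b. 0) = 0"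
  by (induction xs) auto
lemma S2_neg_fun[simp]: "S2 xs (\<lambda>a b. - (F a b :: 'k::ab_group_add)) = - S2 xs F"
  by (induction xs) (auto simp: algebra_simps)
lemma S2_diff_fun[simp]: "S2 xs (\<lambda>a b. (F a b :: 'k::ab_group_add) - G a b) = S2 xs F - S2 xs G"
  by (induction xs) (auto simp: algebra_simps)
lemma S3_add_fun[simp]: "S3 xs (\<lambda>a b c. F a b c + G a b c) = S3 xs F + S3 xs G"
  by (induction xs) (auto simp: algebra_simps)
lemma S3_mult_fun[simp]: "S3 xs (\<lambda>a b c. (k::'k::comm_ring) * F a b c) = k * S3 xs F"
  by (induction xs) (auto simp: algebra_simps)

lemma S2_swap: "S2 xs (\<lambda>a b. S2 ys (\<lambda>c d. F a b c d)) = S2 ys (\<lambda>c d. S2 xs (\<lambda>a b. F a b c d))"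
  by (induction xs) auto

lemma lin_add: "lin s f \<Longrightarrow> f (x + y) = f x + f y" by (simp add: lin_def)
lemma lin_scale: "lin s f \<Longrightarrow> f (s c x) = c * f x" by (simp add: lin_def)
lemma lin_0: "lin s (f :: 'a::monoid_add \<Rightarrow> 'k::field) \<Longrightarrow> f 0 = 0"
  using lin_add[of s f 0 0] by (metis add_0 add_cancel_right_right)
lemma lin_neg: "lin s (f :: 'a::group_add \<Rightarrow> 'k::field) \<Longrightarrow> f (- x) = - f x"
  using lin_add[of s f x "- x"] lin_0[of s f] by (simp add: add_eq_0_iff)
lemma lin_diff: "lin s (f :: 'a::group_add \<Rightarrow> 'k::field) \<Longrightarrow> f (x - y) = f x - f y"
  using lin_add[of s f "x - y" y] by simp
lemma lin_sum_list: "lin s (f :: 'a::monoid_add \<Rightarrow> 'k::field) \<Longrightarrow> f (sum_list (map g xs)) = sum_list (map (\<lambda>x. f (g x)) xs)"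
  by (induction xs) (auto simp: lin_add lin_0)
lemma lin_sum: "lin s (f :: 'a::comm_monoid_add \<Rightarrow> 'k::field) \<Longrightarrow> f (sum g A) = sum (\<lambda>x. f (g x)) A"
  by (induction A rule: infinite_finite_induct) (auto simp: lin_add lin_0)
lemma lin_S2: "lin s (f :: 'a::monoid_add \<Rightarrow> 'k::field) \<Longrightarrow> f (sum_list (map (\<lambda>(a, b). g a b) xs)) = S2 xs (\<lambda>a b. f (g a b))"
  by (induction xs) (auto simp: lin_add lin_0)

lemma S2_cong: "(\<And>a b. (a, b) \<in> set xs \<Longrightarrow> F a b = G a b) \<Longrightarrow> S2 xs F = S2 xs G"
  by (induction xs) auto

lemma S2_swap_list: "S2 xs (\<lambda>a b. sum_list (map (\<lambda>e. F a b e) el)) = sum_list (map (\<lambda>e. S2 xs (\<lambda>a b. F a b e)) el)"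
  by (induction xs) (auto simp: sum_list_addf)

lemma exact_gen:
  fixes sA :: "'k::field \<Rightarrow> 'a::ab_group_add \<Rightarrow> 'a" and sB :: "'k \<Rightarrow> 'b::ab_group_add \<Rightarrow> 'b"
    and L :: "'i \<Rightarrow> 'a \<Rightarrow> 'k"
  assumes vsA: "vector_space sA" and vsB: "vector_space sB"
    and L: "\<And>i. i \<in> I \<Longrightarrow> lin sA (L i)"
    and H: "\<And>i \<phi>. i \<in> I \<Longrightarrow> lin sB \<phi> \<Longrightarrow> S2 t (\<lambda>a b. L i a * \<phi> b) = 0"
  shows "\<exists>zs. set zs \<subseteq> {a. \<forall>i\<in>I. L i a = 0} \<times> UNIV \<and> teq2 sA sB t zs"
proof -
  interpret VA: vector_space sA by (rule vsA)
  interpret VB: vector_space sB by (rule vsB)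
  interpret VP: vector_space_pair sB "(*) :: 'k \<Rightarrow> 'k \<Rightarrow> 'k"
    by (simp add: vector_space_pair_def vsB vs_self)
  let ?Bs = "set (map snd t)"
  obtain E where E: "E \<subseteq> ?Bs" "VB.independent E" "?Bs \<subseteq> VB.span E"
    using VB.maximal_independent_subset[of ?Bs] by blast
  have finE: "finite E" by (rule finite_subset[OF E(1)]) simp
  have "\<forall>e\<in>E. \<exists>g. Vector_Spaces.linear sB (*) g \<and> (\<forall>x\<in>E. g x = (if x = e then 1 else 0))"
  proof
    fix e assume "e \<in> E"
    show "\<exists>g. Vector_Spaces.linear sB (*) g \<and> (\<forall>x\<in>E. g x = (if x = e then 1 else 0))"
      by (rule VP.linear_independent_extend[OF E(2), where f="\<lambda>x. if x = e then 1 else 0"])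
  qed
  then obtain \<phi> where phi: "\<And>e. e \<in> E \<Longrightarrow> Vector_Spaces.linear sB (*) (\<phi> e) \<and> (\<forall>x\<in>E. \<phi> e x = (if x = e then 1 else 0))"
    using bchoice[OF \<open>\<forall>e\<in>E. _\<close>] by blast
  have linphi: "lin sB (\<phi> e)" if "e \<in> E" for e
    using conjunct1[OF phi[OF that]] unfolding lin_def by (simp add: Vector_Spaces.linear_iff)
  have rep: "b = (\<Sum>e\<in>E. sB (\<phi> e b) e)" if "b \<in> VB.span E" for b
  proof -
    have "b \<in> range (\<lambda>u. \<Sum>v\<in>E. sB (u v) v)" using that VB.span_finite[OF finE] by simp
    then obtain u where u: "b = (\<Sum>v\<in>E. sB (u v) v)" by blast
    have "\<phi> e b = u e" if "e \<in> E" for e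
    proof -
      have "\<phi> e b = (\<Sum>v\<in>E. u v * \<phi> e v)"
        unfolding u by (simp add: lin_sum[OF linphi[OF that]] lin_scale[OF linphi[OF that]])
      also have "\<dots> = (\<Sum>v\<in>E. if v = e then u v else 0)"
        by (rule sum.cong) (use phi[OF that] in auto)
      also have "\<dots> = u e" using that finE by simp
      finally show ?thesis .
    qed
    then have "(\<Sum>e\<in>E. sB (\<phi> e b) e) = (\<Sum>e\<in>E. sB (u e) e)" by simp
    then show ?thesis using u by simp
  qed
  obtain el where el: "set el = E" "distinct el" using finite_distinct_list[OF finE] by blast
  define zs where "zs = map (\<lambda>e. (sum_list (map (\<lambda>(a, b). sA (\<phi> e b) a) t), e)) el"
  have "set zs \<subseteq> {a. \<forall>i\<in>I. L i a = 0} \<times> UNIV"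
  proof (clarsimp simp: zs_def)
    fix e i assume "e \<in> set el" "i \<in> I"
    then have "L i (sum_list (map (\<lambda>(a, b). sA (\<phi> e b) a) t)) = S2 t (\<lambda>a b. L i a * \<phi> e b)"
      by (simp add: lin_S2[OF L] lin_scale[OF L] mult.commute)
    then show "L i (sum_list (map (\<lambda>(a, b). sA (\<phi> e b) a) t)) = 0"
      using H[OF \<open>i \<in> I\<close> linphi] \<open>e \<in> set el\<close> el by simp
  qed
  moreover have "teq2 sA sB t zs"
    unfolding teq2_sem
  proof (intro allI impI)
    fix f assume bf: "bil sA sB f"
    have l1: "lin sA (\<lambda>a. f a b)" for b using bf by (simp add: bil_def)
    have l2: "lin sB (f a)" for a using bf by (simp add: bil_def)
    have "S2 zs f = sum_list (map (\<lambda>e. S2 t (\<lambda>a b. \<phi> e b * f a e)) el)"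
      unfolding zs_def S2_def[of "map _ el"]
      by (simp add: o_def lin_S2[OF l1] lin_scale[OF l1])
    also have "\<dots> = S2 t (\<lambda>a b. sum_list (map (\<lambda>e. \<phi> e b * f a e) el))"
      by (rule S2_swap_list[symmetric])
    also have "\<dots> = S2 t (\<lambda>a b. f a (\<Sum>e\<in>E. sB (\<phi> e b) e))"
      by (simp add: lin_sum[OF l2] lin_scale[OF l2] sum_list_distinct_conv_sum_set el)
    also have "\<dots> = S2 t f"
    proof (rule S2_cong)
      fix a b assume "(a, b) \<in> set t"
      then have "b \<in> VB.span E" using E(3) by force
      then show "f a (\<Sum>e\<in>E. sB (\<phi> e b) e) = f a b" using rep by metis
    qed
    finally show "S2 t f = S2 zs f" by simp
  qed
  ultimately show ?thesis by blast
qed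




locale QPB =
  fixes sP :: "'k::field \<Rightarrow> 'p::ring_1 \<Rightarrow> 'p"
    and sH :: "'k \<Rightarrow> 'h::ring_1 \<Rightarrow> 'h"
    and cop :: "'h \<Rightarrow> ('h \<times> 'h) list"
    and eps :: "'h \<Rightarrow> 'k"
    and S :: "'h \<Rightarrow> 'h"
    and DR :: "'p \<Rightarrow> ('p \<times> 'h) list"
    and \<omega> :: "'h \<Rightarrow> ('p \<times> 'p) list"
  assumes qpb: "qpb sP sH cop eps S DR"
    and conn: "connection sP sH cop eps S DR \<omega>"
begin

abbreviation "R p F \<equiv> S2 (DR p) F"
abbreviation "C h F \<equiv> S2 (cop h) F"
abbreviation "W h F \<equiv> S2 (\<omega> h) F"
abbreviation "M \<equiv> coinv sP sH DR"

lemma hopf: "hopf_algebra sH cop eps S" using qpb by (simp add: qpb_def)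
lemma bijS: "bij S" using qpb by (simp add: qpb_def)
lemma rca: "right_comodule_algebra sP sH cop eps DR" using qpb by (simp add: qpb_def)
lemma galois: "galois sP sH DR" using qpb by (simp add: qpb_def)

lemma kaH: "k_algebra sH" using hopf by (simp add: hopf_algebra_def)
lemma kaP: "k_algebra sP" using rca by (simp add: right_comodule_algebra_def)
lemma vsH: "vector_space sH" using kaH by (simp add: k_algebra_def)
lemma vsP: "vector_space sP" using kaP by (simp add: k_algebra_def)

lemma sH_multL[simp]: "sH c x * y = sH c (x * y)" using kaH by (simp add: k_algebra_def)
lemma sH_multR[simp]: "x * sH c y = sH c (x * y)" using kaH by (simp add: k_algebra_def)
lemma sP_multL[simp]: "sP c x * y = sP c (x * y)" using kaP by (simp add: k_algebra_def)
lemma sP_multR[simp]: "x * sP c y = sP c (x * y)" using kaP by (simp add: k_algebra_def)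

lemma cop_add: "teq2 sH sH (cop (x + y)) (cop x @ cop y)" using hopf by (simp add: hopf_algebra_def)
lemma cop_smul: "teq2 sH sH (cop (sH c x)) (map (\<lambda>(a, b). (sH c a, b)) (cop x))" using hopf by (simp add: hopf_algebra_def)
lemma cop_mult: "teq2 sH sH (cop (x * y)) (tmult (cop x) (cop y))" using hopf by (simp add: hopf_algebra_def)
lemma cop_one: "teq2 sH sH (cop 1) [(1, 1)]" using hopf by (simp add: hopf_algebra_def)
lemma cop_coassoc: "teq3 sH sH sH (lift_left cop (cop x)) (lift_right cop (cop x))" using hopf by (simp add: hopf_algebra_def)
lemma eps_add[simp]: "eps (x + y) = eps x + eps y" using hopf by (simp add: hopf_algebra_def)
lemma eps_smul[simp]: "eps (sH c x) = c * eps x" using hopf by (simp add: hopf_algebra_def)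
lemma eps_mult[simp]: "eps (x * y) = eps x * eps y" using hopf by (simp add: hopf_algebra_def)
lemma eps_one[simp]: "eps 1 = 1" using hopf by (simp add: hopf_algebra_def)
lemma counitL: "sum_list (map (\<lambda>(a, b). sH (eps a) b) (cop x)) = x" using hopf by (simp add: hopf_algebra_def)
lemma counitR: "sum_list (map (\<lambda>(a, b). sH (eps b) a) (cop x)) = x" using hopf by (simp add: hopf_algebra_def)
lemma S_add[simp]: "S (x + y) = S x + S y" using hopf by (simp add: hopf_algebra_def)
lemma S_smul[simp]: "S (sH c x) = sH c (S x)" using hopf by (simp add: hopf_algebra_def)
lemma antiL: "sum_list (map (\<lambda>(a, b). S a * b) (cop x)) = sH (eps x) 1" using hopf by (simp add: hopf_algebra_def)
lemma antiR: "sum_list (map (\<lambda>(a, b). a * S b) (cop x)) = sH (eps x) 1" using hopf by (simp add: hopf_algebra_def)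

lemma DR_add: "teq2 sP sH (DR (x + y)) (DR x @ DR y)" using rca by (simp add: right_comodule_algebra_def)
lemma DR_smul: "teq2 sP sH (DR (sP c x)) (map (\<lambda>(a, g). (sP c a, g)) (DR x))" using rca by (simp add: right_comodule_algebra_def)
lemma DR_coassoc: "teq3 sP sH sH (lift_left DR (DR x)) (lift_right cop (DR x))" using rca by (simp add: right_comodule_algebra_def)
lemma DR_counit: "sum_list (map (\<lambda>(a, g). sP (eps g) a) (DR x)) = x" using rca by (simp add: right_comodule_algebra_def)
lemma DR_mult: "teq2 sP sH (DR (x * y)) (tmult (DR x) (DR y))" using rca by (simp add: right_comodule_algebra_def)
lemma DR_one: "teq2 sP sH (DR 1) [(1, 1)]" using rca by (simp add: right_comodule_algebra_def)

lemma om_add: "teq2 sP sP (\<omega> (x + y)) (\<omega> x @ \<omega> y)" using conn by (simp add: connection_def)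
lemma om_smul: "teq2 sP sP (\<omega> (sH c x)) (map (\<lambda>(a, b). (sP c a, b)) (\<omega> x))" using conn by (simp add: connection_def)
lemma om_mu: "sum_list (map (\<lambda>(a, b). a * b) (\<omega> h)) = 0" using conn by (simp add: connection_def)
lemma om_one: "teq2 sP sP (\<omega> 1) []" using conn by (simp add: connection_def)
lemma om_can: "teq2 sP sH (can_map DR (\<omega> h)) [(1, h - sH (eps h) 1)]" using conn by (simp add: connection_def)
lemma om_cov: "teq3 sP sP sH (coact2 DR (\<omega> h))
          (concat (map (\<lambda>(h1, h2, h3). map (\<lambda>(a, b). (a, b, S h1 * h3)) (\<omega> h2))
             (lift_left cop (cop h))))" using conn by (simp add: connection_def)

lemma tmult_S2[simp]: "S2 (tmult xs ys) F = S2 xs (\<lambda>a b. S2 ys (\<lambda>c d. F (a * c) (b * d)))"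
  by (simp add: tmult_def)

lemma bilD1: "bil s1 s2 F \<Longrightarrow> lin s1 (\<lambda>a. F a b)" by (simp add: bil_def)
lemma bilD2: "bil s1 s2 F \<Longrightarrow> lin s2 (F a)" by (simp add: bil_def)

lemma C_add: "bil sH sH F \<Longrightarrow> C (x + y) F = C x F + C y F"
  using cop_add[of x y] by (simp add: teq2_sem)
lemma C_smul: "bil sH sH F \<Longrightarrow> C (sH c x) F = c * C x F"
  using cop_smul[of c x] by (simp add: teq2_sem bil_def lin_def)
lemma C_mult: "bil sH sH F \<Longrightarrow> C (x * y) F = C x (\<lambda>a b. C y (\<lambda>a' b'. F (a * a') (b * b')))"
  using cop_mult[of x y] by (simp add: teq2_sem)
lemma C_one: "bil sH sH F \<Longrightarrow> C 1 F = F 1 1"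
  using cop_one by (simp add: teq2_sem)
lemma C_coassoc: "tri sH sH sH F \<Longrightarrow> C h (\<lambda>u c. C u (\<lambda>a b. F a b c)) = C h (\<lambda>a v. C v (\<lambda>b c. F a b c))"
  using cop_coassoc[of h] by (simp add: teq3_sem)
lemma C_counitL: "lin sH f \<Longrightarrow> C h (\<lambda>a b. eps a * f b) = f h"
  using lin_S2[of sH f "\<lambda>a b. sH (eps a) b" "cop h"] counitL[of h] by (simp add: lin_scale)
lemma C_counitR: "lin sH f \<Longrightarrow> C h (\<lambda>a b. eps b * f a) = f h"
  using lin_S2[of sH f "\<lambda>a b. sH (eps b) a" "cop h"] counitR[of h] by (simp add: lin_scale)
lemma C_antiL: "lin sH f \<Longrightarrow> C h (\<lambda>a b. f (S a * b)) = eps h * f 1"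
  using lin_S2[of sH f "\<lambda>a b. S a * b" "cop h"] antiL[of h] by (simp add: lin_scale)
lemma C_antiR: "lin sH f \<Longrightarrow> C h (\<lambda>a b. f (a * S b)) = eps h * f 1"
  using lin_S2[of sH f "\<lambda>a b. a * S b" "cop h"] antiR[of h] by (simp add: lin_scale)

lemma R_add: "bil sP sH F \<Longrightarrow> R (x + y) F = R x F + R y F"
  using DR_add[of x y] by (simp add: teq2_sem)
lemma R_smul: "bil sP sH F \<Longrightarrow> R (sP c x) F = c * R x F"
  using DR_smul[of c x] by (simp add: teq2_sem bil_def lin_def)
lemma R_mult: "bil sP sH F \<Longrightarrow> R (x * y) F = R x (\<lambda>a b. R y (\<lambda>a' b'. F (a * a') (b * b')))"
  using DR_mult[of x y] by (simp add: teq2_sem)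
lemma R_one: "bil sP sH F \<Longrightarrow> R 1 F = F 1 1"
  using DR_one by (simp add: teq2_sem)
lemma R_coassoc: "tri sP sH sH F \<Longrightarrow> R p (\<lambda>a g. R a (\<lambda>x g'. F x g' g)) = R p (\<lambda>a g. C g (\<lambda>h1 h2. F a h1 h2))"
  using DR_coassoc[of p] by (simp add: teq3_sem)
lemma R_counit: "lin sP f \<Longrightarrow> R p (\<lambda>a g. eps g * f a) = f p"
  using lin_S2[of sP f "\<lambda>a g. sP (eps g) a" "DR p"] DR_counit[of p] by (simp add: lin_scale)
lemma R_M: "m \<in> M \<Longrightarrow> bil sP sH F \<Longrightarrow> R m F = F m 1"
  by (simp add: coinv_def teq2_sem)

lemma W_add: "bil sP sP F \<Longrightarrow> W (x + y) F = W x F + W y F"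
  using om_add[of x y] by (simp add: teq2_sem)
lemma W_smul: "bil sP sP F \<Longrightarrow> W (sH c x) F = c * W x F"
  using om_smul[of c x] by (simp add: teq2_sem bil_def lin_def)
lemma W_one: "bil sP sP F \<Longrightarrow> W 1 F = 0"
  using om_one by (simp add: teq2_sem)
lemma W_mu: "lin sP f \<Longrightarrow> W h (\<lambda>a b. f (a * b)) = 0"
  using lin_S2[of sP f "\<lambda>a b. a * b" "\<omega> h"] om_mu[of h] lin_0[of sP f] by simp
lemma W_can: "bil sP sH F \<Longrightarrow> W h (\<lambda>a b. R b (\<lambda>x g. F (a * x) g)) = F 1 h - eps h * F 1 1"
proof -
  assume b: "bil sP sH F"
  have "W h (\<lambda>a b. R b (\<lambda>x g. F (a * x) g)) = F 1 (h - sH (eps h) 1)"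
    using om_can[of h] b by (simp add: teq2_sem can_map_def)
  also have "\<dots> = F 1 h - eps h * F 1 1"
    using lin_diff[OF bilD2[OF b]] lin_scale[OF bilD2[OF b]] by simp
  finally show ?thesis .
qed
lemma W_cov: "tri sP sP sH G \<Longrightarrow> W h (\<lambda>a b. R a (\<lambda>x g. R b (\<lambda>y g'. G x y (g * g'))))
   = C h (\<lambda>u h3. C u (\<lambda>h1 h2. W h2 (\<lambda>a b. G a b (S h1 * h3))))"
proof -
  assume t: "tri sP sP sH G"
  have l: "S3 (coact2 DR xs) G = S2 xs (\<lambda>a b. R a (\<lambda>x g. R b (\<lambda>y g'. G x y (g * g'))))" for xs
    by (simp add: coact2_def)
  have r: "S3 (concat (map (\<lambda>(h1, h2, h3). map (\<lambda>(a, b). (a, b, S h1 * h3)) (\<omega> h2))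
             (lift_left cop (cop h)))) G = C h (\<lambda>u h3. C u (\<lambda>h1 h2. W h2 (\<lambda>a b. G a b (S h1 * h3))))"
    by (simp del: S3_concat_map2)
  have e: "S3 (coact2 DR (\<omega> h)) G = S3 (concat (map (\<lambda>(h1, h2, h3). map (\<lambda>(a, b). (a, b, S h1 * h3)) (\<omega> h2))
             (lift_left cop (cop h)))) G" using om_cov[of h, unfolded teq3_sem] t by blast
  show ?thesis using e unfolding l r .
qed

end




context QPB begin

lemmas ml = R_add R_smul C_add C_smul W_add W_smul ring_distribs bil_def lin_def tri_def

lemma sH_one[simp]: "sH 1 x = x" using vsH by (simp add: vector_space_def)
lemma sP_one[simp]: "sP 1 x = x" using vsP by (simp add: vector_space_def)
lemma S_0[simp]: "S 0 = 0" using S_add[of 0 0] by simp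

lemma vec_eqH: "(\<And>\<psi>. lin sH \<psi> \<Longrightarrow> \<psi> x = \<psi> y) \<Longrightarrow> x = y" by (rule vec_eq_sem[OF vsH])
lemma vec_eqP: "(\<And>\<psi>. lin sP \<psi> \<Longrightarrow> \<psi> x = \<psi> y) \<Longrightarrow> x = y" by (rule vec_eq_sem[OF vsP])

lemma S_one[simp]: "S 1 = 1"
proof (rule vec_eqH)
  fix \<psi> assume l: "lin sH \<psi>"
  have "C 1 (\<lambda>a b. \<psi> (S a * b)) = \<psi> (S 1 * 1)" by (rule C_one) (use l in \<open>simp add: ml\<close>)
  moreover have "C 1 (\<lambda>a b. \<psi> (S a * b)) = eps 1 * \<psi> 1" by (rule C_antiL[OF l])
  ultimately show "\<psi> (S 1) = \<psi> 1" by simp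
qed

lemma FM: assumes l: "lin sH f"
  shows "C v (\<lambda>x1 a. C w (\<lambda>y1 c. f (S (x1 * y1) * (a * c)))) = eps v * eps w * f 1"
proof -
  have "C (v * w) (\<lambda>p q. f (S p * q)) = C v (\<lambda>x1 a. C w (\<lambda>y1 c. f (S (x1 * y1) * (a * c))))"
    by (rule C_mult) (use l in \<open>simp add: ml\<close>)
  moreover have "C (v * w) (\<lambda>p q. f (S p * q)) = eps (v * w) * f 1" by (rule C_antiL[OF l])
  ultimately show ?thesis by simp
qed

lemma MG: assumes l: "lin sH f"
  shows "C x (\<lambda>a b. C y (\<lambda>c d. f (a * (c * (S d * S b))))) = eps x * eps y * f 1"
proof -
  have i: "C y (\<lambda>c d. f (a * (c * (S d * S b)))) = eps y * f (a * S b)" for a b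
    using C_antiR[of "\<lambda>m. f (a * (m * S b))" y] l by (simp add: ml mult.assoc)
  have "C x (\<lambda>a b. f (a * S b)) = eps x * f 1" by (rule C_antiR[OF l])
  then show ?thesis by (simp add: i mult.assoc mult.commute mult.left_commute)
qed

lemma S_mult: "S (x * y) = S y * S x"
proof (rule vec_eqH)
  fix \<psi> assume l: "lin sH \<psi>"
  have e0: "\<psi> (S (a * y)) = C y (\<lambda>c d. eps d * \<psi> (S (a * c)))" for a
    by (rule C_counitR[symmetric]) (use l in \<open>simp add: ml\<close>)
  have "\<psi> (S (x * y)) = C x (\<lambda>a b. eps b * \<psi> (S (a * y)))"
    by (rule C_counitR[symmetric]) (use l in \<open>simp add: ml\<close>)
  also have "\<dots> = C x (\<lambda>a b. C y (\<lambda>c d. eps b * (eps d * \<psi> (S (a * c)))))"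
    by (simp add: e0)
  also have "\<dots> = C x (\<lambda>a b. C y (\<lambda>c d. C b (\<lambda>b1 b2. C d (\<lambda>d1 d2. \<psi> (S (a * c) * (b1 * (d1 * (S d2 * S b2))))))))"
  proof -
    have "eps b * (eps d * \<psi> (S (a * c))) = C b (\<lambda>b1 b2. C d (\<lambda>d1 d2. \<psi> (S (a * c) * (b1 * (d1 * (S d2 * S b2))))))" for a b c d
      using MG[of "\<lambda>m. \<psi> (S (a * c) * m)" b d] l by (simp add: ml mult.assoc)
    then show ?thesis by simp
  qed
  also have "\<dots> = C x (\<lambda>a b. C b (\<lambda>b1 b2. C y (\<lambda>c d. C d (\<lambda>d1 d2. \<psi> (S (a * c) * (b1 * (d1 * (S d2 * S b2))))))))"
    by (simp only: S2_swap[of "cop y"])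
  also have "\<dots> = C x (\<lambda>a b. C b (\<lambda>b1 b2. C y (\<lambda>w d2. C w (\<lambda>c d1. \<psi> (S (a * c) * (b1 * (d1 * (S d2 * S b2))))))))"
  proof -
    have "C y (\<lambda>c d. C d (\<lambda>d1 d2. \<psi> (S (a * c) * (b1 * (d1 * (S d2 * S b2)))))) =
          C y (\<lambda>w d2. C w (\<lambda>c d1. \<psi> (S (a * c) * (b1 * (d1 * (S d2 * S b2))))))" for a b1 b2
      by (rule C_coassoc[symmetric]) (use l in \<open>simp add: ml\<close>)
    then show ?thesis by simp
  qed
  also have "\<dots> = C x (\<lambda>v b2. C v (\<lambda>a b1. C y (\<lambda>w d2. C w (\<lambda>c d1. \<psi> (S (a * c) * (b1 * (d1 * (S d2 * S b2))))))))"
    by (rule C_coassoc[symmetric]) (use l in \<open>simp add: ml\<close>)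
  also have "\<dots> = C x (\<lambda>v b2. C y (\<lambda>w d2. C v (\<lambda>a b1. C w (\<lambda>c d1. \<psi> (S (a * c) * (b1 * (d1 * (S d2 * S b2))))))))"
    by (simp only: S2_swap[of "cop y"])
  also have "\<dots> = C x (\<lambda>v b2. C y (\<lambda>w d2. eps v * eps w * \<psi> (S d2 * S b2)))"
  proof -
    have "C v (\<lambda>a b1. C w (\<lambda>c d1. \<psi> (S (a * c) * (b1 * (d1 * (S d2 * S b2)))))) = eps v * eps w * \<psi> (S d2 * S b2)" for v w d2 b2
      using FM[of "\<lambda>m. \<psi> (m * (S d2 * S b2))" v w] l by (simp add: ml mult.assoc)
    then show ?thesis by simp
  qed
  also have "\<dots> = \<psi> (S y * S x)"
  proof -
    have "C y (\<lambda>w d2. eps w * \<psi> (S d2 * S b2)) = \<psi> (S y * S b2)" for b2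
      by (rule C_counitL) (use l in \<open>simp add: ml\<close>)
    moreover have "C x (\<lambda>v b2. eps v * \<psi> (S y * S b2)) = \<psi> (S y * S x)"
      by (rule C_counitL) (use l in \<open>simp add: ml\<close>)
    ultimately show ?thesis by (simp add: mult.assoc)
  qed
  finally show "\<psi> (S (x * y)) = \<psi> (S y * S x)" .
qed

lemma S_sum_list: "S (sum_list (map g xs)) = sum_list (map (\<lambda>x. S (g x)) xs)"
  by (induction xs) auto

lemma injS: "inj S" using bijS bij_is_inj by blast
lemma Si_S[simp]: "inv S (S x) = x" using injS by simp
lemma S_Si[simp]: "S (inv S x) = x" using bijS by (simp add: bij_is_surj surj_f_inv_f)
lemma Si_add[simp]: "inv S (x + y) = inv S x + inv S y" by (metis S_add Si_S S_Si)
lemma Si_smul[simp]: "inv S (sH c x) = sH c (inv S x)" by (metis S_smul Si_S S_Si)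
lemma Si_one[simp]: "inv S 1 = 1" by (metis S_one Si_S)
lemma Si_mult: "inv S (x * y) = inv S y * inv S x" by (metis S_mult Si_S S_Si)

lemma anti_inv_sum: "sum_list (map (\<lambda>(a, b). b * inv S a) (cop u)) = sH (eps u) 1"
proof -
  have "S (sum_list (map (\<lambda>(a, b). b * inv S a) (cop u))) = sum_list (map (\<lambda>(a, b). a * S b) (cop u))"
    by (simp add: S_sum_list S_mult case_prod_unfold)
  also have "\<dots> = S (sH (eps u) 1)" by (simp add: antiR)
  finally show ?thesis by (rule injD[OF injS])
qed

lemma anti_inv_sum2: "sum_list (map (\<lambda>(a, b). inv S b * a) (cop u)) = sH (eps u) 1"
proof -
  have "S (sum_list (map (\<lambda>(a, b). inv S b * a) (cop u))) = sum_list (map (\<lambda>(a, b). S a * b) (cop u))"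
    by (simp add: S_sum_list S_mult case_prod_unfold)
  also have "\<dots> = S (sH (eps u) 1)" by (simp add: antiL)
  finally show ?thesis by (rule injD[OF injS])
qed

lemma C_anti_inv: "lin sH f \<Longrightarrow> C u (\<lambda>a b. f (b * inv S a)) = eps u * f 1"
  using lin_S2[of sH f "\<lambda>a b. b * inv S a" "cop u"] anti_inv_sum[of u] by (simp add: lin_scale)

lemma C_anti_inv2: "lin sH f \<Longrightarrow> C u (\<lambda>a b. f (inv S b * a)) = eps u * f 1"
  using lin_S2[of sH f "\<lambda>a b. inv S b * a" "cop u"] anti_inv_sum2[of u] by (simp add: lin_scale)

lemma lin_eps: "lin sH eps" by (simp add: lin_def)

lemma eps_S[simp]: "eps (S h) = eps h"
proof -
  have "C h (\<lambda>a b. eps (S a * b)) = eps h * eps 1" by (rule C_antiL[OF lin_eps])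
  moreover have "C h (\<lambda>a b. eps b * eps (S a)) = eps (S h)" by (rule C_counitR) (simp add: lin_def)
  ultimately show ?thesis by (simp add: mult.commute)
qed

lemma eps_Si[simp]: "eps (inv S h) = eps h" by (metis eps_S S_Si)

lemma DPhi2: assumes b: "bil sH sH G"
  shows "C h (\<lambda>x l4. C x (\<lambda>l1 y. C y (\<lambda>l2 l3. G (l1 * S l4) (l2 * S l3)))) = eps h * G 1 1"
proof -
  have i1: "C y (\<lambda>l2 l3. G (l1 * S l4) (l2 * S l3)) = eps y * G (l1 * S l4) 1" for y l1 l4
    by (rule C_antiR) (use b in \<open>simp add: ml\<close>)
  have i2: "C x (\<lambda>l1 y. eps y * G (l1 * S l4) 1) = G (x * S l4) 1" for x l4
    by (rule C_counitR) (use b in \<open>simp add: ml\<close>)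
  have i3: "C h (\<lambda>x l4. G (x * S l4) 1) = eps h * G 1 1"
    by (rule C_antiR) (use b in \<open>simp add: ml\<close>)
  show ?thesis by (simp only: i1 i2 i3)
qed

lemma anticomult: assumes b: "bil sH sH F"
  shows "C (S h) F = C h (\<lambda>a b. F (S b) (S a))"
proof -
  let ?K = "\<lambda>h1 l1 l2 l3 l4. C (S h1) (\<lambda>u v. F (u * (l1 * S l4)) (v * (l2 * S l3)))"
  have "C (S h) F = C h (\<lambda>h1 h2. eps h2 * C (S h1) F)"
    by (rule C_counitR[symmetric]) (use b in \<open>simp add: ml\<close>)
  also have "\<dots> = C h (\<lambda>h1 h2. C (S h1) (\<lambda>u v. C h2 (\<lambda>x l4. C x (\<lambda>l1 y. C y (\<lambda>l2 l3. F (u * (l1 * S l4)) (v * (l2 * S l3)))))))"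
  proof -
    have "C h2 (\<lambda>x l4. C x (\<lambda>l1 y. C y (\<lambda>l2 l3. F (u * (l1 * S l4)) (v * (l2 * S l3))))) = eps h2 * F u v" for h2 u v
      using DPhi2[of "\<lambda>p q. F (u * p) (v * q)" h2] b by (simp add: ml)
    then show ?thesis by simp
  qed
  also have "\<dots> = C h (\<lambda>h1 h2. C h2 (\<lambda>x l4. C x (\<lambda>l1 y. C y (\<lambda>l2 l3. ?K h1 l1 l2 l3 l4))))"
  proof -
    have "C (S h1) (\<lambda>u v. C h2 (\<lambda>x l4. C x (\<lambda>l1 y. C y (\<lambda>l2 l3. F (u * (l1 * S l4)) (v * (l2 * S l3))))))
      = C h2 (\<lambda>x l4. C x (\<lambda>l1 y. C y (\<lambda>l2 l3. ?K h1 l1 l2 l3 l4)))" for h1 h2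
      by (simp only: S2_swap[of "cop (S h1)"])
    then show ?thesis by simp
  qed
  also have "\<dots> = C h (\<lambda>h1 h2. C h2 (\<lambda>x l4. C x (\<lambda>w l3. C w (\<lambda>l1 l2. ?K h1 l1 l2 l3 l4))))"
  proof -
    have "C x (\<lambda>l1 y. C y (\<lambda>l2 l3. ?K h1 l1 l2 l3 l4)) = C x (\<lambda>w l3. C w (\<lambda>l1 l2. ?K h1 l1 l2 l3 l4))" for x h1 l4
      by (rule C_coassoc[symmetric]) (use b in \<open>simp add: ml\<close>)
    then show ?thesis by simp
  qed
  also have "\<dots> = C h (\<lambda>h1 h2. C h2 (\<lambda>w v. C w (\<lambda>l1 l2. C v (\<lambda>l3 l4. ?K h1 l1 l2 l3 l4))))"
  proof -
    have "C h2 (\<lambda>x l4. C x (\<lambda>w l3. C w (\<lambda>l1 l2. ?K h1 l1 l2 l3 l4))) = C h2 (\<lambda>w v. C v (\<lambda>l3 l4. C w (\<lambda>l1 l2. ?K h1 l1 l2 l3 l4)))" for h1 h2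
      by (rule C_coassoc) (use b in \<open>simp add: ml\<close>)
    moreover have "C v (\<lambda>l3 l4. C w (\<lambda>l1 l2. ?K h1 l1 l2 l3 l4)) = C w (\<lambda>l1 l2. C v (\<lambda>l3 l4. ?K h1 l1 l2 l3 l4))" for h1 v w
      by (rule S2_swap)
    ultimately show ?thesis by simp
  qed
  also have "\<dots> = C h (\<lambda>m r. C m (\<lambda>h1 l. C l (\<lambda>l1 l2. C r (\<lambda>l3 l4. ?K h1 l1 l2 l3 l4))))"
    by (rule C_coassoc[symmetric]) (use b in \<open>simp add: ml\<close>)
  also have "\<dots> = C h (\<lambda>m r. C m (\<lambda>h1 l. C (S h1 * l) (\<lambda>p q. C r (\<lambda>l3 l4. F (p * S l4) (q * S l3)))))"
  proof -
    have "C (S h1 * l) (\<lambda>p q. C r (\<lambda>l3 l4. F (p * S l4) (q * S l3))) = 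
          C (S h1) (\<lambda>u v. C l (\<lambda>l1 l2. C r (\<lambda>l3 l4. F (u * l1 * S l4) (v * l2 * S l3))))" for h1 l r
      by (rule C_mult) (use b in \<open>simp add: ml\<close>)
    moreover have "C (S h1) (\<lambda>u v. C l (\<lambda>l1 l2. C r (\<lambda>l3 l4. F (u * l1 * S l4) (v * l2 * S l3)))) =
          C l (\<lambda>l1 l2. C r (\<lambda>l3 l4. ?K h1 l1 l2 l3 l4))" for h1 l r
      by (simp only: S2_swap[of "cop (S h1)"] mult.assoc)
    ultimately show ?thesis by simp
  qed
  also have "\<dots> = C h (\<lambda>m r. eps m * C r (\<lambda>l3 l4. F (S l4) (S l3)))"
  proof -
    have "C m (\<lambda>h1 l. C (S h1 * l) (\<lambda>p q. C r (\<lambda>l3 l4. F (p * S l4) (q * S l3)))) = eps m * C 1 (\<lambda>p q. C r (\<lambda>l3 l4. F (p * S l4) (q * S l3)))" for m r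
      by (rule C_antiL[where f="\<lambda>z. C z (\<lambda>p q. C r (\<lambda>l3 l4. F (p * S l4) (q * S l3)))"]) (use b in \<open>simp add: ml\<close>)
    moreover have "C 1 (\<lambda>p q. C r (\<lambda>l3 l4. F (p * S l4) (q * S l3))) = C r (\<lambda>l3 l4. F (S l4) (S l3))" for r
      by (subst C_one) (use b in \<open>simp_all add: ml\<close>)
    ultimately show ?thesis by simp
  qed
  also have "\<dots> = C h (\<lambda>a b. F (S b) (S a))"
    by (rule C_counitL) (use b in \<open>simp add: ml\<close>)
  finally show ?thesis .
qed

lemma anticomult_inv: assumes b: "bil sH sH F"
  shows "C (inv S h) F = C h (\<lambda>a b. F (inv S b) (inv S a))"
proof -
  have "C (S (inv S h)) (\<lambda>a b. F (inv S b) (inv S a)) = C (inv S h) (\<lambda>a b. F (inv S (S a)) (inv S (S b)))"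
    by (rule anticomult) (use b in \<open>simp add: ml\<close>)
  then show ?thesis by simp
qed

end



context QPB begin

definition "Dl p = dP p @ tneg (Pi_om DR \<omega> (dP p))"
definition "Dbar p = dP p @ tneg (Pibar_om S DR \<omega> (dP p))"

lemma bil_ext: "bil s1 s2 F \<Longrightarrow> (\<forall>x y. F (x + y) = (\<lambda>b. F x b + F y b)) \<and> (\<forall>c x. F (s1 c x) = (\<lambda>b. c * F x b))"
  by (simp add: bil_def lin_def fun_eq_iff)

lemma bil_extn: "bil s1 s2 (F :: 'a::ab_group_add \<Rightarrow> 'b::plus \<Rightarrow> 'k::field) \<Longrightarrow> (\<forall>x. F (- x) = (\<lambda>b. - F x b)) \<and> (\<forall>x y. F (x - y) = (\<lambda>b. F x b - F y b))"
  using lin_neg[OF bilD1] lin_diff[OF bilD1] by (auto simp: fun_eq_iff)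

lemma tri_extn: "tri s1 s2 s3 (\<gamma> :: 'a::ab_group_add \<Rightarrow> 'b::ab_group_add \<Rightarrow> 'c::plus \<Rightarrow> 'k::field) \<Longrightarrow>
    (\<forall>x. \<gamma> (- x) = (\<lambda>b c. - \<gamma> x b c)) \<and> (\<forall>x y. \<gamma> (x - y) = (\<lambda>b c. \<gamma> x b c - \<gamma> y b c))
  \<and> (\<forall>a x. \<gamma> a (- x) = (\<lambda>c. - \<gamma> a x c)) \<and> (\<forall>a x y. \<gamma> a (x - y) = (\<lambda>c. \<gamma> a x c - \<gamma> a y c))"
proof -
  assume t: "tri s1 s2 s3 \<gamma>"
  have l1: "lin s1 (\<lambda>a. \<gamma> a b c)" for b c using t by (simp add: tri_def)
  have l2: "lin s2 (\<lambda>b. \<gamma> a b c)" for a c using t by (simp add: tri_def)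
  show ?thesis using lin_neg[OF l1] lin_diff[OF l1] lin_neg[OF l2] lin_diff[OF l2] by (auto simp: fun_eq_iff)
qed

lemma tri_ext: "tri s1 s2 s3 \<gamma> \<Longrightarrow> (\<forall>x y. \<gamma> (x + y) = (\<lambda>b c. \<gamma> x b c + \<gamma> y b c)) \<and> (\<forall>k x. \<gamma> (s1 k x) = (\<lambda>b c. k * \<gamma> x b c))
   \<and> (\<forall>a x y. \<gamma> a (x + y) = (\<lambda>c. \<gamma> a x c + \<gamma> a y c)) \<and> (\<forall>a k x. \<gamma> a (s2 k x) = (\<lambda>c. k * \<gamma> a x c))"
  by (simp add: tri_def lin_def fun_eq_iff)

lemma R_lin: "bil sP sH F \<Longrightarrow> lin sP (\<lambda>p. R p F)"
  by (simp add: lin_def R_add R_smul)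
lemma C_lin: "bil sH sH F \<Longrightarrow> lin sH (\<lambda>h. C h F)"
  by (simp add: lin_def C_add C_smul)
lemma W_lin: "bil sP sP F \<Longrightarrow> lin sH (\<lambda>h. W h F)"
  by (simp add: lin_def W_add W_smul)

lemma S2_tneg[simp]: "S2 (tneg xs) F = S2 xs (\<lambda>a b. F (- a) b)"
  by (simp add: tneg_def)

lemma S2_DL[simp]: "S2 (DL S DR a) G = R a (\<lambda>x g. G (inv S g) x)"
  by (simp add: DL_def)

lemma Pi_dP: assumes b: "bil sP sP F"
  shows "S2 (Pi_om DR \<omega> (dP p)) F = R p (\<lambda>x g. W g (\<lambda>a b. F (x * a) b))"
proof -
  have "R 1 (\<lambda>x g. W g (\<lambda>a b. F (- p * x * a) b)) = W 1 (\<lambda>a b. F (- p * 1 * a) b)"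
    by (rule R_one) (use b in \<open>simp add: ml bil_ext[OF b] bil_extn[OF b]\<close>)
  also have "\<dots> = 0" by (rule W_one) (use b in \<open>simp add: ml bil_ext[OF b] bil_extn[OF b]\<close>)
  finally show ?thesis by (simp add: Pi_om_def dP_def)
qed

lemma Dl_S2: assumes b: "bil sP sP F"
  shows "S2 (Dl p) F = F 1 p - F p 1 - R p (\<lambda>x g. W g (\<lambda>a b. F (x * a) b))"
proof -
  have n: "F (- a) b = - F a b" for a b using lin_neg[OF bilD1[OF b]] .
  have "S2 (Dl p) F = F 1 p + F (- p) 1 - S2 (Pi_om DR \<omega> (dP p)) F"
    by (simp add: Dl_def n dP_def)
  then show ?thesis by (simp add: Pi_dP[OF b] n)
qed

lemma Pibar_dP: assumes b: "bil sP sP F"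
  shows "S2 (Pibar_om S DR \<omega> (dP p)) F = - R p (\<lambda>x g. W (inv S g) (\<lambda>a b. F a (b * x)))"
proof -
  have "R 1 (\<lambda>x g. W (inv S g) (\<lambda>a b. F a (b * x * p))) = W (inv S 1) (\<lambda>a b. F a (b * 1 * p))"
    by (rule R_one) (use b in \<open>simp add: ml\<close>)
  also have "\<dots> = 0" by simp (rule W_one, use b in \<open>simp add: ml\<close>)
  finally have z: "R 1 (\<lambda>x g. W (inv S g) (\<lambda>a b. F a (b * x * p))) = 0" .
  have "R (- p) (\<lambda>x g. W (inv S g) (\<lambda>a b. F a (b * x))) = - R p (\<lambda>x g. W (inv S g) (\<lambda>a b. F a (b * x)))"
    by (rule lin_neg[OF R_lin]) (use b in \<open>simp add: ml\<close>)
  then show ?thesis using z by (simp add: Pibar_om_def dP_def)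
qed

lemma Dbar_S2: assumes b: "bil sP sP F"
  shows "S2 (Dbar p) F = F 1 p - F p 1 + R p (\<lambda>x g. W (inv S g) (\<lambda>a b. F a (b * x)))"
proof -
  have n: "F (- a) b = - F a b" for a b using lin_neg[OF bilD1[OF b]] .
  have "S2 (Dbar p) F = F 1 p + F (- p) 1 - S2 (Pibar_om S DR \<omega> (dP p)) F"
    by (simp add: Dbar_def n dP_def)
  then show ?thesis by (simp add: Pibar_dP[OF b] n)
qed

definition "c2 h \<longleftrightarrow> teq3 sH sP sP (lift_left (DL S DR) (\<omega> h))
               ([(h, 1, 1), (- sH (eps h) 1, 1, 1)]
                @ concat (map (\<lambda>(h1, h2). map (\<lambda>(a, b). (h1, a, b)) (\<omega> h2)) (cop h)))"
definition "c3 h \<longleftrightarrow> teq3 sP sP sH (lift_right DR (\<omega> h))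
               ([(1, 1, h), (- sP (eps h) 1, 1, 1)]
                @ concat (map (\<lambda>(h1, h2). map (\<lambda>(a, b). (a, b, h2)) (\<omega> h1)) (cop h)))"

lemma c2_sem: "c2 h \<longleftrightarrow> (\<forall>\<gamma>. tri sH sP sP \<gamma> \<longrightarrow> W h (\<lambda>a b. R a (\<lambda>x g. \<gamma> (inv S g) x b))
     = \<gamma> h 1 1 - eps h * \<gamma> 1 1 1 + C h (\<lambda>h1 h2. W h2 (\<lambda>a b. \<gamma> h1 a b)))"
proof -
  have "S3 ([(h, 1, 1), (- sH (eps h) 1, 1, 1)]
                @ concat (map (\<lambda>(h1, h2). map (\<lambda>(a, b). (h1, a, b)) (\<omega> h2)) (cop h))) \<gamma>
     = \<gamma> h 1 1 - eps h * \<gamma> 1 1 1 + C h (\<lambda>h1 h2. W h2 (\<lambda>a b. \<gamma> h1 a b))" if t: "tri sH sP sP \<gamma>" for \<gamma>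
  proof -
    have l: "lin sH (\<lambda>a. \<gamma> a 1 1)" using t by (simp add: tri_def)
    show ?thesis using lin_neg[OF l] lin_scale[OF l] by simp
  qed
  then show ?thesis unfolding c2_def teq3_sem by auto
qed

lemma c3_sem: "c3 h \<longleftrightarrow> (\<forall>\<gamma>. tri sP sP sH \<gamma> \<longrightarrow> W h (\<lambda>a b. R b (\<lambda>y g. \<gamma> a y g))
     = \<gamma> 1 1 h - eps h * \<gamma> 1 1 1 + C h (\<lambda>h1 h2. W h1 (\<lambda>a b. \<gamma> a b h2)))"
proof -
  have "S3 ([(1, 1, h), (- sP (eps h) 1, 1, 1)]
                @ concat (map (\<lambda>(h1, h2). map (\<lambda>(a, b). (a, b, h2)) (\<omega> h1)) (cop h))) \<gamma>
     = \<gamma> 1 1 h - eps h * \<gamma> 1 1 1 + C h (\<lambda>h1 h2. W h1 (\<lambda>a b. \<gamma> a b h2))" if t: "tri sP sP sH \<gamma>" for \<gamma>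
  proof -
    have l: "lin sP (\<lambda>a. \<gamma> a 1 1)" using t by (simp add: tri_def)
    show ?thesis using lin_neg[OF l] lin_scale[OF l] by simp
  qed
  then show ?thesis unfolding c3_def teq3_sem by auto
qed

section \<open>Coinvariants and (Omega^1 M) P\<close>

lemma one_M: "1 \<in> M" by (simp add: coinv_def DR_one)

lemma neg1_M: "- 1 \<in> M"
  unfolding coinv_def
proof (simp add: teq2_sem, intro allI impI)
  fix F assume b: "bil sP sH F"
  have "R (- 1) F = - R 1 F" by (rule lin_neg[OF R_lin[OF b]])
  also have "\<dots> = - F 1 1" by (simp add: R_one[OF b])
  also have "\<dots> = F (- 1) 1" by (simp add: lin_neg[OF bilD1[OF b]])
  finally show "R (- 1) F = F (- 1) 1" .
qed

lemma M_R: "m \<in> M \<longleftrightarrow> (\<forall>F. bil sP sH F \<longrightarrow> R m F = F m 1)"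
  by (simp add: coinv_def teq2_sem)

lemma mu_teq: "teq2 sP sP t zs \<Longrightarrow> sum_list (map (\<lambda>(a, b). a * b) t) = sum_list (map (\<lambda>(a, b). a * b) zs)"
proof (rule vec_eqP)
  fix \<psi> assume l: "lin sP \<psi>" and e: "teq2 sP sP t zs"
  have b: "bil sP sP (\<lambda>a b. \<psi> (a * b))" using l by (simp add: ml)
  show "\<psi> (sum_list (map (\<lambda>(a, b). a * b) t)) = \<psi> (sum_list (map (\<lambda>(a, b). a * b) zs))"
    using e b unfolding lin_S2[OF l] teq2_sem by blast
qed

lemma X1: assumes zs: "set zs \<subseteq> M \<times> UNIV" and e: "teq2 sP sP t zs"
    and mu: "sum_list (map (\<lambda>(a, b). a * b) t) = 0"
  shows "in_OmM_P sP M t"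
proof -
  define ys where "ys = map (\<lambda>(m, q). ([(m, 1), (- 1, m)], q)) zs"
  have mu2: "sum_list (map (\<lambda>(a, b). a * b) zs) = 0" using mu mu_teq[OF e] by simp
  have c1: "\<forall>(\<xi>, q) \<in> set ys. set \<xi> \<subseteq> M \<times> M \<and> sum_list (map (\<lambda>(m, n). m * n) \<xi>) = 0"
    using zs one_M neg1_M by (auto simp: ys_def)
  have c2: "teq2 sP sP t (concat (map (\<lambda>(\<xi>, q). map (\<lambda>(m, n). (m, n * q)) \<xi>) ys))"
    unfolding teq2_sem
  proof (intro allI impI)
    fix F assume b: "bil sP sP F"
    have l2: "lin sP (F 1)" using b by (simp add: bil_def)
    have n: "F (- 1) x = - F 1 x" for x using lin_neg[OF bilD1[OF b]] .
    have "S2 (concat (map (\<lambda>(\<xi>, q). map (\<lambda>(m, n). (m, n * q)) \<xi>) (map (\<lambda>(m, q). ([(m, 1), (- 1, m)], q)) us))) F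
       = S2 us (\<lambda>m q. F m q - F 1 (m * q))" for us :: "('p \<times> 'p) list"
      by (induction us) (auto simp: n)
    then have "S2 (concat (map (\<lambda>(\<xi>, q). map (\<lambda>(m, n). (m, n * q)) \<xi>) ys)) F = S2 zs (\<lambda>m q. F m q - F 1 (m * q))"
      by (simp add: ys_def)
    also have "\<dots> = S2 zs F - F 1 (sum_list (map (\<lambda>(a, b). a * b) zs))"
      by (simp add: lin_S2[OF l2])
    also have "\<dots> = S2 t F" using mu2 lin_0[OF l2] e b by (simp add: teq2_sem)
    finally show "S2 t F = S2 (concat (map (\<lambda>(\<xi>, q). map (\<lambda>(m, n). (m, n * q)) \<xi>) ys)) F" by simp
  qed
  show ?thesis unfolding in_OmM_P_def using c1 c2 by blast
qed

lemma X2: assumes "in_OmM_P sP M t" shows "\<exists>zs. set zs \<subseteq> M \<times> UNIV \<and> teq2 sP sP t zs"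
proof -
  obtain ys :: "(('p \<times> 'p) list \<times> 'p) list" where
    y: "\<forall>(\<xi>, q) \<in> set ys. set \<xi> \<subseteq> M \<times> M \<and> sum_list (map (\<lambda>(m, n). m * n) \<xi>) = 0"
    "teq2 sP sP t (concat (map (\<lambda>(\<xi>, q). map (\<lambda>(m, n). (m, n * q)) \<xi>) ys))"
    using assms unfolding in_OmM_P_def by blast
  have "set (concat (map (\<lambda>(\<xi>, q). map (\<lambda>(m, n). (m, n * q)) \<xi>) ys)) \<subseteq> M \<times> UNIV"
    using y(1) by fastforce
  then show ?thesis using y(2) by blast
qed

lemma X1': assumes zs: "set zs \<subseteq> UNIV \<times> M" and e: "teq2 sP sP t zs"
    and mu: "sum_list (map (\<lambda>(a, b). a * b) t) = 0"
  shows "in_P_OmM sP M t"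
proof -
  define ys where "ys = map (\<lambda>(q, m). (q, [(1, m), (m, - 1)])) zs"
  have mu2: "sum_list (map (\<lambda>(a, b). a * b) zs) = 0" using mu mu_teq[OF e] by simp
  have c1: "\<forall>(q, \<xi>) \<in> set ys. set \<xi> \<subseteq> M \<times> M \<and> sum_list (map (\<lambda>(m, n). m * n) \<xi>) = 0"
    using zs one_M neg1_M by (auto simp: ys_def)
  have c2: "teq2 sP sP t (concat (map (\<lambda>(q, \<xi>). map (\<lambda>(m, n). (q * m, n)) \<xi>) ys))"
    unfolding teq2_sem
  proof (intro allI impI)
    fix F assume b: "bil sP sP F"
    have l1: "lin sP (\<lambda>a. F a 1)" using b by (simp add: bil_def)
    have n: "F x (- 1) = - F x 1" for x using lin_neg[OF bilD2[OF b]] .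
    have "S2 (concat (map (\<lambda>(q, \<xi>). map (\<lambda>(m, n). (q * m, n)) \<xi>) (map (\<lambda>(q, m). (q, [(1, m), (m, - 1)])) us))) F
       = S2 us (\<lambda>q m. F q m - F (q * m) 1)" for us :: "('p \<times> 'p) list"
      by (induction us) (auto simp: n)
    then have "S2 (concat (map (\<lambda>(q, \<xi>). map (\<lambda>(m, n). (q * m, n)) \<xi>) ys)) F = S2 zs (\<lambda>q m. F q m - F (q * m) 1)"
      by (simp add: ys_def)
    also have "\<dots> = S2 zs F - F (sum_list (map (\<lambda>(a, b). a * b) zs)) 1"
      by (simp add: lin_S2[OF l1])
    also have "\<dots> = S2 t F" using mu2 lin_0[OF l1] e b by (simp add: teq2_sem)
    finally show "S2 t F = S2 (concat (map (\<lambda>(q, \<xi>). map (\<lambda>(m, n). (q * m, n)) \<xi>) ys)) F" by simp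
  qed
  show ?thesis unfolding in_P_OmM_def using c1 c2 by blast
qed

lemma E1: assumes H: "\<And>\<gamma>. tri sP sH sP \<gamma> \<Longrightarrow> S2 t (\<lambda>a b. R a (\<lambda>x g. \<gamma> x g b)) = S2 t (\<lambda>a b. \<gamma> a 1 b)"
  shows "\<exists>zs. set zs \<subseteq> M \<times> UNIV \<and> teq2 sP sP t zs"
proof -
  have "\<exists>zs. set zs \<subseteq> {a. \<forall>\<beta>\<in>{\<beta>. bil sP sH \<beta>}. R a \<beta> - \<beta> a 1 = 0} \<times> UNIV \<and> teq2 sP sP t zs"
  proof (rule exact_gen[OF vsP vsP])
    fix \<beta> assume "\<beta> \<in> {\<beta>. bil sP sH \<beta>}"
    then have b: "bil sP sH \<beta>" by simp
    show "lin sP (\<lambda>a. R a \<beta> - \<beta> a 1)" using R_lin[OF b] bilD1[OF b] by (simp add: lin_def algebra_simps)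
  next
    fix \<beta> \<phi> assume "\<beta> \<in> {\<beta>. bil sP sH \<beta>}" and l: "lin sP \<phi>"
    then have b: "bil sP sH \<beta>" by simp
    have "S2 t (\<lambda>a b. R a (\<lambda>x g. \<beta> x g * \<phi> b)) = S2 t (\<lambda>a b. \<beta> a 1 * \<phi> b)"
      by (rule H) (use b l in \<open>simp add: ml\<close>)
    then show "S2 t (\<lambda>a b. (R a \<beta> - \<beta> a 1) * \<phi> b) = 0" by (simp add: left_diff_distrib)
  qed
  moreover have "{a. \<forall>\<beta>\<in>{\<beta>. bil sP sH \<beta>}. R a \<beta> - \<beta> a 1 = 0} \<subseteq> M" by (auto simp: M_R)
  ultimately show ?thesis by blast
qed

lemma E2: assumes H: "\<And>\<gamma>. tri sP sP sH \<gamma> \<Longrightarrow> S2 t (\<lambda>a b. R b (\<lambda>y g. \<gamma> a y g)) = S2 t (\<lambda>a b. \<gamma> a b 1)"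
  shows "\<exists>zs. set zs \<subseteq> UNIV \<times> M \<and> teq2 sP sP t zs"
proof -
  let ?t = "map (\<lambda>(a, b). (b, a)) t"
  have "\<exists>zs. set zs \<subseteq> {a. \<forall>\<beta>\<in>{\<beta>. bil sP sH \<beta>}. R a \<beta> - \<beta> a 1 = 0} \<times> UNIV \<and> teq2 sP sP ?t zs"
  proof (rule exact_gen[OF vsP vsP])
    fix \<beta> assume "\<beta> \<in> {\<beta>. bil sP sH \<beta>}"
    then have b: "bil sP sH \<beta>" by simp
    show "lin sP (\<lambda>a. R a \<beta> - \<beta> a 1)" using R_lin[OF b] bilD1[OF b] by (simp add: lin_def algebra_simps)
  next
    fix \<beta> \<phi> assume "\<beta> \<in> {\<beta>. bil sP sH \<beta>}" and l: "lin sP \<phi>"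
    then have b: "bil sP sH \<beta>" by simp
    have "S2 t (\<lambda>a b. R b (\<lambda>y g. \<phi> a * \<beta> y g)) = S2 t (\<lambda>a b. \<phi> a * \<beta> b 1)"
      by (rule H) (use b l in \<open>simp add: ml\<close>)
    then show "S2 ?t (\<lambda>a b. (R a \<beta> - \<beta> a 1) * \<phi> b) = 0" by (simp add: algebra_simps)
  qed
  moreover have "{a. \<forall>\<beta>\<in>{\<beta>. bil sP sH \<beta>}. R a \<beta> - \<beta> a 1 = 0} \<subseteq> M" by (auto simp: M_R)
  ultimately obtain zs where zs: "set zs \<subseteq> M \<times> UNIV" "teq2 sP sP ?t zs" by blast
  have "teq2 sP sP t (map (\<lambda>(a, b). (b, a)) zs)"
    unfolding teq2_sem
  proof (intro allI impI)
    fix F assume b: "bil sP sP F"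
    then have "bil sP sP (\<lambda>a b. F b a)" by (simp add: bil_def)
    then show "S2 t F = S2 (map (\<lambda>(a, b). (b, a)) zs) F" using zs(2) unfolding teq2_sem by simp
  qed
  moreover have "set (map (\<lambda>(a, b). (b, a)) zs) \<subseteq> UNIV \<times> M" using zs(1) by auto
  ultimately show ?thesis by blast
qed

lemma left_strong_iff: "left_strong sP sH DR \<omega> \<longleftrightarrow> (\<forall>p. in_OmM_P sP M (Dl p))"
  by (simp add: left_strong_def Dl_def)

end



context QPB begin

lemma Ylist_Tot: assumes t: "tri sP sP sH \<gamma>"
  shows "R p (\<lambda>x g. W g (\<lambda>a b. R (x * a) (\<lambda>u k. R b (\<lambda>y g'. \<gamma> u y (k * g')))))
       = R p (\<lambda>x g. C g (\<lambda>h2 h3. W h2 (\<lambda>a b. \<gamma> (x * a) b h3)))"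
proof -
  note mls = ml tri_ext[OF t] tri_extn[OF t]
  have s1: "R (x * a) (\<lambda>u k. R b (\<lambda>y g'. \<gamma> u y (k * g')))
      = R x (\<lambda>x' g1. R a (\<lambda>a' g2. R b (\<lambda>y g'. \<gamma> (x' * a') y (g1 * (g2 * g')))))" for x a b
    by (subst R_mult) (use t in \<open>simp_all add: mls mult.assoc\<close>)
  have s3: "W g (\<lambda>a b. R a (\<lambda>a' g2. R b (\<lambda>y g'. \<gamma> (x' * a') y (g1 * (g2 * g')))))
      = C g (\<lambda>u h3. C u (\<lambda>h1 h2. W h2 (\<lambda>a b. \<gamma> (x' * a) b (g1 * (S h1 * h3)))))" for g x' g1
    by (rule W_cov[where G="\<lambda>a y k. \<gamma> (x' * a) y (g1 * k)"]) (use t in \<open>simp add: mls\<close>)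
  have "R p (\<lambda>x g. W g (\<lambda>a b. R (x * a) (\<lambda>u k. R b (\<lambda>y g'. \<gamma> u y (k * g')))))
      = R p (\<lambda>x g. R x (\<lambda>x' g1. W g (\<lambda>a b. R a (\<lambda>a' g2. R b (\<lambda>y g'. \<gamma> (x' * a') y (g1 * (g2 * g'))))))) "
    by (simp only: s1 S2_swap[of "\<omega> _"])
  also have "\<dots> = R p (\<lambda>x g. R x (\<lambda>x' g1. C g (\<lambda>u h3. C u (\<lambda>h1 h2. W h2 (\<lambda>a b. \<gamma> (x' * a) b (g1 * (S h1 * h3))))))) "
    by (simp only: s3)
  also have "\<dots> = R p (\<lambda>x g. C g (\<lambda>g1 g0. C g0 (\<lambda>u h3. C u (\<lambda>h1 h2. W h2 (\<lambda>a b. \<gamma> (x * a) b (g1 * (S h1 * h3))))))) "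
    by (rule R_coassoc) (use t in \<open>simp add: mls\<close>)
  also have "\<dots> = R p (\<lambda>x g. C g (\<lambda>g1 g0. C g0 (\<lambda>h1 v. C v (\<lambda>h2 h3. W h2 (\<lambda>a b. \<gamma> (x * a) b (g1 * (S h1 * h3))))))) "
  proof -
    have "C g0 (\<lambda>u h3. C u (\<lambda>h1 h2. W h2 (\<lambda>a b. \<gamma> (x * a) b (g1 * (S h1 * h3)))))
        = C g0 (\<lambda>h1 v. C v (\<lambda>h2 h3. W h2 (\<lambda>a b. \<gamma> (x * a) b (g1 * (S h1 * h3)))))" for x g1 g0
      by (rule C_coassoc) (use t in \<open>simp add: mls\<close>)
    then show ?thesis by simp
  qed
  also have "\<dots> = R p (\<lambda>x g. C g (\<lambda>w v. C w (\<lambda>g1 h1. C v (\<lambda>h2 h3. W h2 (\<lambda>a b. \<gamma> (x * a) b (g1 * (S h1 * h3))))))) "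
  proof -
    have "C g (\<lambda>g1 g0. C g0 (\<lambda>h1 v. C v (\<lambda>h2 h3. W h2 (\<lambda>a b. \<gamma> (x * a) b (g1 * (S h1 * h3))))))
        = C g (\<lambda>w v. C w (\<lambda>g1 h1. C v (\<lambda>h2 h3. W h2 (\<lambda>a b. \<gamma> (x * a) b (g1 * (S h1 * h3))))))" for x g
      by (rule C_coassoc[symmetric]) (use t in \<open>simp add: mls\<close>)
    then show ?thesis by simp
  qed
  also have "\<dots> = R p (\<lambda>x g. C g (\<lambda>w v. eps w * C v (\<lambda>h2 h3. W h2 (\<lambda>a b. \<gamma> (x * a) b h3))))"
  proof -
    have "C w (\<lambda>g1 h1. C v (\<lambda>h2 h3. W h2 (\<lambda>a b. \<gamma> (x * a) b (g1 * (S h1 * h3)))))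
        = eps w * C v (\<lambda>h2 h3. W h2 (\<lambda>a b. \<gamma> (x * a) b (1 * h3)))" for x w v
      using C_antiR[of "\<lambda>m. C v (\<lambda>h2 h3. W h2 (\<lambda>a b. \<gamma> (x * a) b (m * h3)))" w] t
      by (simp add: mls mult.assoc)
    then show ?thesis by simp
  qed
  also have "\<dots> = R p (\<lambda>x g. C g (\<lambda>h2 h3. W h2 (\<lambda>a b. \<gamma> (x * a) b h3)))"
  proof -
    have "C g (\<lambda>w v. eps w * C v (\<lambda>h2 h3. W h2 (\<lambda>a b. \<gamma> (x * a) b h3))) = C g (\<lambda>h2 h3. W h2 (\<lambda>a b. \<gamma> (x * a) b h3))" for x g
      by (rule C_counitL) (use t in \<open>simp add: mls\<close>)
    then show ?thesis by simp
  qed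
  finally show ?thesis .
qed

definition "zf \<gamma> h = W h (\<lambda>a b. R b (\<lambda>y g. \<gamma> a y g)) - (\<gamma> 1 1 h - eps h * \<gamma> 1 1 1 + C h (\<lambda>h1 h2. W h1 (\<lambda>a b. \<gamma> a b h2)))"

lemma c3_zf: "c3 h \<longleftrightarrow> (\<forall>\<gamma>. tri sP sP sH \<gamma> \<longrightarrow> zf \<gamma> h = 0)"
  unfolding c3_sem zf_def by simp

lemma key_iii: assumes ls: "left_strong sP sH DR \<omega>" and t: "tri sP sP sH \<gamma>"
  shows "R p (\<lambda>x g. zf (\<lambda>a b c. \<gamma> (x * a) b c) g) = 0"
proof -
  note mls = ml tri_ext[OF t] tri_extn[OF t]
  obtain zs where zs: "set zs \<subseteq> M \<times> UNIV" "teq2 sP sP (Dl p) zs"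
    using ls X2 unfolding left_strong_iff by blast
  define Tot where "Tot a b = R a (\<lambda>x g. R b (\<lambda>y g'. \<gamma> x y (g * g')))" for a b
  define Sec where "Sec a b = R b (\<lambda>y g'. \<gamma> a y g')" for a b
  have bT: "bil sP sP Tot" unfolding Tot_def using t by (simp add: mls)
  have bS: "bil sP sP Sec" unfolding Sec_def using t by (simp add: mls)
  have TS: "Tot m b = Sec m b" if "m \<in> M" for m b
    unfolding Tot_def Sec_def by (subst R_M[OF that]) (use t in \<open>simp_all add: mls\<close>)
  have eq: "S2 (Dl p) Tot = S2 (Dl p) Sec"
  proof -
    have "S2 (Dl p) Tot = S2 zs Tot" using zs(2) bT by (simp add: teq2_sem)
    also have "\<dots> = S2 zs Sec" by (rule S2_cong) (use zs(1) TS in auto)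
    also have "\<dots> = S2 (Dl p) Sec" using zs(2) bS by (simp add: teq2_sem)
    finally show ?thesis .
  qed
  have T1: "Tot 1 p = R p (\<lambda>y g'. \<gamma> 1 y g')"
    unfolding Tot_def by (subst R_one) (use t in \<open>simp_all add: mls\<close>)
  have T2: "Tot p 1 = R p (\<lambda>x g. \<gamma> x 1 g)"
  proof -
    have "R 1 (\<lambda>y g'. \<gamma> x y (g * g')) = \<gamma> x 1 g" for x g
      by (subst R_one) (use t in \<open>simp_all add: mls\<close>)
    then show ?thesis unfolding Tot_def by simp
  qed
  have T3: "R p (\<lambda>x g. W g (\<lambda>a b. Tot (x * a) b)) = R p (\<lambda>x g. C g (\<lambda>h2 h3. W h2 (\<lambda>a b. \<gamma> (x * a) b h3)))"
    unfolding Tot_def by (rule Ylist_Tot[OF t])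
  have S1: "Sec 1 p = R p (\<lambda>y g'. \<gamma> 1 y g')" unfolding Sec_def ..
  have S2': "Sec p 1 = \<gamma> p 1 1" unfolding Sec_def by (subst R_one) (use t in \<open>simp_all add: mls\<close>)
  have cu: "R p (\<lambda>x g. eps g * \<gamma> x 1 1) = \<gamma> p 1 1" by (rule R_counit) (use t in \<open>simp add: mls\<close>)
  from eq have "R p (\<lambda>y g'. \<gamma> 1 y g') - R p (\<lambda>x g. \<gamma> x 1 g) - R p (\<lambda>x g. C g (\<lambda>h2 h3. W h2 (\<lambda>a b. \<gamma> (x * a) b h3)))
     = R p (\<lambda>y g'. \<gamma> 1 y g') - \<gamma> p 1 1 - R p (\<lambda>x g. W g (\<lambda>a b. R b (\<lambda>y g'. \<gamma> (x * a) y g')))"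
    unfolding Dl_S2[OF bT] Dl_S2[OF bS] T1 T2 T3 S1 S2' by (simp add: Sec_def[abs_def])
  then show ?thesis unfolding zf_def using cu by (simp add: algebra_simps)
qed

lemma i_iii: assumes ls: "left_strong sP sH DR \<omega>" shows "c3 h"
  unfolding c3_zf
proof (intro allI impI)
  fix \<gamma> assume t: "tri sP sP sH \<gamma>"
  obtain xs where xs: "teq2 sP sH (can_map DR xs) [(1, h)]"
    using galois unfolding galois_def by blast
  define B where "B u g = zf (\<lambda>a b c. \<gamma> (u * a) b c) g" for u g
  have bB: "bil sP sH B" unfolding B_def zf_def using t by (simp add: ml tri_ext[OF t] tri_extn[OF t])
  have "S2 (can_map DR xs) B = S2 [(1, h)] B" using xs bB by (simp add: teq2_sem)
  moreover have "S2 [(1, h)] B = zf \<gamma> h" by (simp add: B_def)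
  moreover have "S2 (can_map DR xs) B = 0"
  proof -
    have "R p (\<lambda>x g. B (q * x) g) = 0" for q p
    proof -
      have tq: "tri sP sP sH (\<lambda>a b c. \<gamma> (q * a) b c)" using t by (simp add: ml tri_ext[OF t] tri_extn[OF t])
      show ?thesis using key_iii[OF ls tq, of p] by (simp add: B_def mult.assoc)
    qed
    then show ?thesis by (simp add: can_map_def)
  qed
  ultimately show "zf \<gamma> h = 0" by simp
qed

end



context QPB begin

lemma iii_ii: assumes c3all: "\<And>h. c3 h" shows "c2 h"
  unfolding c2_sem
proof (intro allI impI)
  fix \<gamma> assume t: "tri sH sP sP \<gamma>"
  note mls = ml tri_ext[OF t] tri_extn[OF t]
  have step1: "R b (\<lambda>y g''. R y (\<lambda>y' g'. \<gamma> (inv S (g * (g'' * inv S g'))) x y')) = \<gamma> (inv S g) x b" for b g x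
  proof -
    have "R b (\<lambda>y g''. R y (\<lambda>y' g'. \<gamma> (inv S (g * (g'' * inv S g'))) x y'))
        = R b (\<lambda>y g''. C g'' (\<lambda>h1 h2. \<gamma> (inv S (g * (h2 * inv S h1))) x y))"
      by (rule R_coassoc) (use t in \<open>simp add: mls\<close>)
    also have "\<dots> = R b (\<lambda>y g''. eps g'' * \<gamma> (inv S (g * 1)) x y)"
    proof -
      have "C g'' (\<lambda>h1 h2. \<gamma> (inv S (g * (h2 * inv S h1))) x y) = eps g'' * \<gamma> (inv S (g * 1)) x y" for g'' y
        by (rule C_anti_inv[where f="\<lambda>m. \<gamma> (inv S (g * m)) x y"]) (use t in \<open>simp add: mls\<close>)
      then show ?thesis by simp
    qed
    also have "\<dots> = \<gamma> (inv S g) x b"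
      by simp (rule R_counit, use t in \<open>simp add: mls\<close>)
    finally show ?thesis .
  qed
  have "W h (\<lambda>a b. R a (\<lambda>x g. \<gamma> (inv S g) x b))
      = W h (\<lambda>a b. R a (\<lambda>x g. R b (\<lambda>y g''. R y (\<lambda>y' g'. \<gamma> (inv S ((g * g'') * inv S g')) x y'))))"
    by (simp add: step1 mult.assoc)
  also have "\<dots> = C h (\<lambda>u h3. C u (\<lambda>h1 h2. W h2 (\<lambda>a b. R b (\<lambda>y' g'. \<gamma> (inv S ((S h1 * h3) * inv S g')) a y'))))"
    by (rule W_cov[where G="\<lambda>x y k. R y (\<lambda>y' g'. \<gamma> (inv S (k * inv S g')) x y')"]) (use t in \<open>simp add: mls\<close>)
  also have "\<dots> = C h (\<lambda>u h3. C u (\<lambda>h1 h2. \<gamma> (inv S (S h1 * (h3 * inv S h2))) 1 1)) 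
      - C h (\<lambda>u h3. C u (\<lambda>h1 h2. eps h2 * \<gamma> (inv S (S h1 * h3)) 1 1))
      + C h (\<lambda>u h3. C u (\<lambda>h1 h2. C h2 (\<lambda>k1 k2. W k1 (\<lambda>a b. \<gamma> (inv S (S h1 * (h3 * inv S k2))) a b))))"
  proof -
    have "W h2 (\<lambda>a b. R b (\<lambda>y' g'. \<gamma> (inv S (k * inv S g')) a y'))
      = \<gamma> (inv S (k * inv S h2)) 1 1 - eps h2 * \<gamma> (inv S (k * inv S 1)) 1 1
        + C h2 (\<lambda>k1 k2. W k1 (\<lambda>a b. \<gamma> (inv S (k * inv S k2)) a b))" (is "?L h2 k = _") for h2 k
    proof -
      have "tri sP sP sH (\<lambda>a y g'. \<gamma> (inv S (k * inv S g')) a y)" using t by (simp add: mls)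
      then show ?thesis using c3all[of h2] unfolding c3_sem by blast
    qed
    note st3 = this
    show ?thesis by (simp only: st3) (simp add: mult.assoc)
  qed
  also have "C h (\<lambda>u h3. C u (\<lambda>h1 h2. \<gamma> (inv S (S h1 * (h3 * inv S h2))) 1 1)) = \<gamma> h 1 1"
  proof -
    have "C h (\<lambda>u h3. C u (\<lambda>h1 h2. \<gamma> (inv S (S h1 * (h3 * inv S h2))) 1 1))
        = C h (\<lambda>h1 v. C v (\<lambda>h2 h3. \<gamma> (inv S (S h1 * (h3 * inv S h2))) 1 1))"
      by (rule C_coassoc) (use t in \<open>simp add: mls\<close>)
    also have "\<dots> = C h (\<lambda>h1 v. eps v * \<gamma> (inv S (S h1 * 1)) 1 1)"
    proof -
      have "C v (\<lambda>h2 h3. \<gamma> (inv S (S h1 * (h3 * inv S h2))) 1 1) = eps v * \<gamma> (inv S (S h1 * 1)) 1 1" for h1 v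
        by (rule C_anti_inv[where f="\<lambda>m. \<gamma> (inv S (S h1 * m)) 1 1"]) (use t in \<open>simp add: mls\<close>)
      then show ?thesis by simp
    qed
    also have "\<dots> = \<gamma> h 1 1" by simp (rule C_counitR, use t in \<open>simp add: mls\<close>)
    finally show ?thesis .
  qed
  also have "C h (\<lambda>u h3. C u (\<lambda>h1 h2. eps h2 * \<gamma> (inv S (S h1 * h3)) 1 1)) = eps h * \<gamma> 1 1 1"
  proof -
    have "C u (\<lambda>h1 h2. eps h2 * \<gamma> (inv S (S h1 * h3)) 1 1) = \<gamma> (inv S (S u * h3)) 1 1" for u h3
      by (rule C_counitR) (use t in \<open>simp add: mls\<close>)
    moreover have "C h (\<lambda>u h3. \<gamma> (inv S (S u * h3)) 1 1) = eps h * \<gamma> (inv S 1) 1 1"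
      by (rule C_antiL[where f="\<lambda>m. \<gamma> (inv S m) 1 1"]) (use t in \<open>simp add: mls\<close>)
    ultimately show ?thesis by simp
  qed
  also have "C h (\<lambda>u h3. C u (\<lambda>h1 h2. C h2 (\<lambda>k1 k2. W k1 (\<lambda>a b. \<gamma> (inv S (S h1 * (h3 * inv S k2))) a b))))
      = C h (\<lambda>h1 h2. W h2 (\<lambda>a b. \<gamma> h1 a b))"
  proof -
    have "C u (\<lambda>h1 h2. C h2 (\<lambda>k1 k2. W k1 (\<lambda>a b. \<gamma> (inv S (S h1 * (h3 * inv S k2))) a b)))
        = C u (\<lambda>w k2. C w (\<lambda>h1 k1. W k1 (\<lambda>a b. \<gamma> (inv S (S h1 * (h3 * inv S k2))) a b)))" for u h3
      by (rule C_coassoc[symmetric]) (use t in \<open>simp add: mls\<close>)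
    then have "C h (\<lambda>u h3. C u (\<lambda>h1 h2. C h2 (\<lambda>k1 k2. W k1 (\<lambda>a b. \<gamma> (inv S (S h1 * (h3 * inv S k2))) a b))))
        = C h (\<lambda>u h3. C u (\<lambda>w k2. C w (\<lambda>h1 k1. W k1 (\<lambda>a b. \<gamma> (inv S (S h1 * (h3 * inv S k2))) a b))))" by simp
    also have "\<dots> = C h (\<lambda>w v. C v (\<lambda>k2 h3. C w (\<lambda>h1 k1. W k1 (\<lambda>a b. \<gamma> (inv S (S h1 * (h3 * inv S k2))) a b))))"
      by (rule C_coassoc) (use t in \<open>simp add: mls\<close>)
    also have "\<dots> = C h (\<lambda>w v. eps v * C w (\<lambda>h1 k1. W k1 (\<lambda>a b. \<gamma> (inv S (S h1 * 1)) a b)))"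
    proof -
      have "C v (\<lambda>k2 h3. C w (\<lambda>h1 k1. W k1 (\<lambda>a b. \<gamma> (inv S (S h1 * (h3 * inv S k2))) a b)))
          = eps v * C w (\<lambda>h1 k1. W k1 (\<lambda>a b. \<gamma> (inv S (S h1 * 1)) a b))" for v w
        by (rule C_anti_inv[where f="\<lambda>m. C w (\<lambda>h1 k1. W k1 (\<lambda>a b. \<gamma> (inv S (S h1 * m)) a b))"]) (use t in \<open>simp add: mls\<close>)
      then show ?thesis by simp
    qed
    also have "\<dots> = C h (\<lambda>h1 k1. W k1 (\<lambda>a b. \<gamma> (inv S (S h1 * 1)) a b))"
      by (rule C_counitR) (use t in \<open>simp add: mls\<close>)
    finally show ?thesis by simp
  qed
  finally show "W h (\<lambda>a b. R a (\<lambda>x g. \<gamma> (inv S g) x b)) = \<gamma> h 1 1 - eps h * \<gamma> 1 1 1 + C h (\<lambda>h1 h2. W h2 (\<lambda>a b. \<gamma> h1 a b))" .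
qed

lemma mu_Dl: "sum_list (map (\<lambda>(a, b). a * b) (Dl p)) = 0"
proof (rule vec_eqP)
  fix \<psi> assume l: "lin sP \<psi>"
  have b: "bil sP sP (\<lambda>a b. \<psi> (a * b))" using l by (simp add: ml)
  have "W g (\<lambda>a b. \<psi> (x * (a * b))) = 0" for g x
    by (rule W_mu[where f="\<lambda>m. \<psi> (x * m)"]) (use l in \<open>simp add: ml\<close>)
  then have "S2 (Dl p) (\<lambda>a b. \<psi> (a * b)) = 0" by (simp add: Dl_S2[OF b] mult.assoc)
  then show "\<psi> (sum_list (map (\<lambda>(a, b). a * b) (Dl p))) = \<psi> 0" by (simp add: lin_S2[OF l] lin_0[OF l])
qed

lemma ii_i: assumes c2all: "\<And>h. c2 h" shows "left_strong sP sH DR \<omega>"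
  unfolding left_strong_iff
proof
  fix p
  have "\<exists>zs. set zs \<subseteq> M \<times> UNIV \<and> teq2 sP sP (Dl p) zs"
  proof (rule E1)
    fix \<gamma> assume t: "tri sP sH sP \<gamma>"
    note mls = ml tri_ext[OF t] tri_extn[OF t]
    have bF: "bil sP sP (\<lambda>a b. R a (\<lambda>x g. \<gamma> x g b))" using t by (simp add: mls)
    have bG: "bil sP sP (\<lambda>a b. \<gamma> a 1 b)" using t by (simp add: mls)
    have r1: "R 1 (\<lambda>x g. \<gamma> x g p) = \<gamma> 1 1 p" by (rule R_one) (use t in \<open>simp add: mls\<close>)
    have s1: "R (x0 * a) (\<lambda>u k. \<gamma> u k b) = R x0 (\<lambda>x g1. R a (\<lambda>a' g2. \<gamma> (x * a') (g1 * g2) b))" for x0 a b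
      by (rule R_mult) (use t in \<open>simp add: mls\<close>)
    have s2: "W g0 (\<lambda>a b. R a (\<lambda>a' g2. \<gamma> (x * a') (g1 * g2) b))
        = \<gamma> x (g1 * S g0) 1 - eps g0 * \<gamma> x g1 1 + C g0 (\<lambda>h1 h2. W h2 (\<lambda>a b. \<gamma> (x * a) (g1 * S h1) b))" for x g1 g0
    proof -
      have t': "tri sH sP sP (\<lambda>u a' b. \<gamma> (x * a') (g1 * S u) b)" using t by (simp add: mls)
      from c2all[of g0, unfolded c2_sem, rule_format, OF t'] show ?thesis by simp
    qed
    have "R p (\<lambda>x0 g0. W g0 (\<lambda>a b. R (x0 * a) (\<lambda>u k. \<gamma> u k b)))
        = R p (\<lambda>x0 g0. R x0 (\<lambda>x g1. \<gamma> x (g1 * S g0) 1 - eps g0 * \<gamma> x g1 1 + C g0 (\<lambda>h1 h2. W h2 (\<lambda>a b. \<gamma> (x * a) (g1 * S h1) b))))"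
      by (simp only: s1 S2_swap[of "\<omega> _"] s2)
    also have "\<dots> = R p (\<lambda>x g. C g (\<lambda>g1 g0. \<gamma> x (g1 * S g0) 1 - eps g0 * \<gamma> x g1 1 + C g0 (\<lambda>h1 h2. W h2 (\<lambda>a b. \<gamma> (x * a) (g1 * S h1) b))))"
      by (rule R_coassoc) (use t in \<open>simp add: mls\<close>)
    also have "\<dots> = R p (\<lambda>x g. eps g * \<gamma> x 1 1 - \<gamma> x g 1 + W g (\<lambda>a b. \<gamma> (x * a) 1 b))"
    proof -
      have a1: "C g (\<lambda>g1 g0. \<gamma> x (g1 * S g0) 1) = eps g * \<gamma> x 1 1" for x g
        by (rule C_antiR[where f="\<lambda>m. \<gamma> x m 1"]) (use t in \<open>simp add: mls\<close>)
      have a2: "C g (\<lambda>g1 g0. eps g0 * \<gamma> x g1 1) = \<gamma> x g 1" for x g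
        by (rule C_counitR) (use t in \<open>simp add: mls\<close>)
      have a3: "C g (\<lambda>g1 g0. C g0 (\<lambda>h1 h2. W h2 (\<lambda>a b. \<gamma> (x * a) (g1 * S h1) b))) = W g (\<lambda>a b. \<gamma> (x * a) 1 b)" for x g
      proof -
        have "C g (\<lambda>g1 g0. C g0 (\<lambda>h1 h2. W h2 (\<lambda>a b. \<gamma> (x * a) (g1 * S h1) b)))
            = C g (\<lambda>w h2. C w (\<lambda>g1 h1. W h2 (\<lambda>a b. \<gamma> (x * a) (g1 * S h1) b)))"
          by (rule C_coassoc[symmetric]) (use t in \<open>simp add: mls\<close>)
        also have "\<dots> = C g (\<lambda>w h2. eps w * W h2 (\<lambda>a b. \<gamma> (x * a) 1 b))"
        proof -
          have "C w (\<lambda>g1 h1. W h2 (\<lambda>a b. \<gamma> (x * a) (g1 * S h1) b)) = eps w * W h2 (\<lambda>a b. \<gamma> (x * a) 1 b)" for w h2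
            by (rule C_antiR[where f="\<lambda>m. W h2 (\<lambda>a b. \<gamma> (x * a) m b)"]) (use t in \<open>simp add: mls\<close>)
          then show ?thesis by simp
        qed
        also have "\<dots> = W g (\<lambda>a b. \<gamma> (x * a) 1 b)"
          by (rule C_counitL) (use t in \<open>simp add: mls\<close>)
        finally show ?thesis .
      qed
      show ?thesis by (simp add: a1 a2 a3)
    qed
    also have "\<dots> = \<gamma> p 1 1 - R p (\<lambda>x g. \<gamma> x g 1) + R p (\<lambda>x g. W g (\<lambda>a b. \<gamma> (x * a) 1 b))"
    proof -
      have "R p (\<lambda>x g. eps g * \<gamma> x 1 1) = \<gamma> p 1 1" by (rule R_counit) (use t in \<open>simp add: mls\<close>)
      then show ?thesis by simp
    qed
    finally have Y: "R p (\<lambda>x0 g0. W g0 (\<lambda>a b. R (x0 * a) (\<lambda>u k. \<gamma> u k b)))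
       = \<gamma> p 1 1 - R p (\<lambda>x g. \<gamma> x g 1) + R p (\<lambda>x g. W g (\<lambda>a b. \<gamma> (x * a) 1 b))" .
    show "S2 (Dl p) (\<lambda>a b. R a (\<lambda>x g. \<gamma> x g b)) = S2 (Dl p) (\<lambda>a b. \<gamma> a 1 b)"
      unfolding Dl_S2[OF bF] Dl_S2[OF bG] r1 Y by simp
  qed
  then obtain zs where "set zs \<subseteq> M \<times> UNIV" "teq2 sP sP (Dl p) zs" by blast
  then show "in_OmM_P sP M (Dl p)" using X1 mu_Dl by blast
qed

lemma mu_Dbar: "sum_list (map (\<lambda>(a, b). a * b) (Dbar p)) = 0"
proof (rule vec_eqP)
  fix \<psi> assume l: "lin sP \<psi>"
  have b: "bil sP sP (\<lambda>a b. \<psi> (a * b))" using l by (simp add: ml)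
  have "W g (\<lambda>a b. \<psi> (a * (b * x))) = 0" for g x
    using W_mu[where f="\<lambda>m. \<psi> (m * x)"] l by (simp add: ml mult.assoc)
  then have "S2 (Dbar p) (\<lambda>a b. \<psi> (a * b)) = 0" by (simp add: Dbar_S2[OF b])
  then show "\<psi> (sum_list (map (\<lambda>(a, b). a * b) (Dbar p))) = \<psi> 0" by (simp add: lin_S2[OF l] lin_0[OF l])
qed

lemma i_iv: assumes c3all: "\<And>h. c3 h" shows "in_P_OmM sP M (Dbar p)"
proof -
  have "\<exists>zs. set zs \<subseteq> UNIV \<times> M \<and> teq2 sP sP (Dbar p) zs"
  proof (rule E2)
    fix \<gamma> assume t: "tri sP sP sH \<gamma>"
    note mls = ml tri_ext[OF t] tri_extn[OF t]
    have bF: "bil sP sP (\<lambda>a b. R b (\<lambda>y g. \<gamma> a y g))" using t by (simp add: mls)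
    have bG: "bil sP sP (\<lambda>a b. \<gamma> a b 1)" using t by (simp add: mls)
    have r1: "R 1 (\<lambda>y g. \<gamma> p y g) = \<gamma> p 1 1" by (rule R_one) (use t in \<open>simp add: mls\<close>)
    have s1: "R (b * x) (\<lambda>y g. \<gamma> a y g) = R b (\<lambda>b' g1. R x (\<lambda>x' g2. \<gamma> a (b' * x') (g1 * g2)))" for a b x
      by (rule R_mult) (use t in \<open>simp add: mls\<close>)
    have s2: "W k (\<lambda>a b. R b (\<lambda>b' g1. R x (\<lambda>x' g2. \<gamma> a (b' * x') (g1 * g2))))
       = R x (\<lambda>x' g2. \<gamma> 1 x' (k * g2)) - eps k * R x (\<lambda>x' g2. \<gamma> 1 x' g2)
         + C k (\<lambda>k1 k2. W k1 (\<lambda>a b. R x (\<lambda>x' g2. \<gamma> a (b * x') (k2 * g2))))" for k x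
    proof -
      have t': "tri sP sP sH (\<lambda>a b' g1. R x (\<lambda>x' g2. \<gamma> a (b' * x') (g1 * g2)))" using t by (simp add: mls)
      from c3all[of k, unfolded c3_sem, rule_format, OF t'] show ?thesis by simp
    qed
    have T1: "R p (\<lambda>x g. R x (\<lambda>x' g2. \<gamma> 1 x' (inv S g * g2))) = \<gamma> 1 p 1"
    proof -
      have "R p (\<lambda>x g. R x (\<lambda>x' g2. \<gamma> 1 x' (inv S g * g2))) = R p (\<lambda>x g. C g (\<lambda>h1 h2. \<gamma> 1 x (inv S h2 * h1)))"
        by (rule R_coassoc) (use t in \<open>simp add: mls\<close>)
      also have "\<dots> = R p (\<lambda>x g. eps g * \<gamma> 1 x 1)"
      proof -
        have "C g (\<lambda>h1 h2. \<gamma> 1 x (inv S h2 * h1)) = eps g * \<gamma> 1 x 1" for x g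
          by (rule C_anti_inv2[where f="\<lambda>m. \<gamma> 1 x m"]) (use t in \<open>simp add: mls\<close>)
        then show ?thesis by simp
      qed
      also have "\<dots> = \<gamma> 1 p 1" by (rule R_counit) (use t in \<open>simp add: mls\<close>)
      finally show ?thesis .
    qed
    have T2: "R p (\<lambda>x g. eps g * R x (\<lambda>x' g2. \<gamma> 1 x' g2)) = R p (\<lambda>x' g2. \<gamma> 1 x' g2)"
      by (rule R_counit) (use t in \<open>simp add: mls\<close>)
    have T3: "R p (\<lambda>x g. C (inv S g) (\<lambda>k1 k2. W k1 (\<lambda>a b. R x (\<lambda>x' g2. \<gamma> a (b * x') (k2 * g2)))))
        = R p (\<lambda>x g. W (inv S g) (\<lambda>a b. \<gamma> a (b * x) 1))"
    proof -
      have "C (inv S g) (\<lambda>k1 k2. W k1 (\<lambda>a b. R x (\<lambda>x' g2. \<gamma> a (b * x') (k2 * g2))))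
          = C g (\<lambda>h1 h2. W (inv S h2) (\<lambda>a b. R x (\<lambda>x' g2. \<gamma> a (b * x') (inv S h1 * g2))))" for x g
        by (rule anticomult_inv) (use t in \<open>simp add: mls\<close>)
      also have "\<dots> x g = R x (\<lambda>x' g2. C g (\<lambda>h1 h2. W (inv S h2) (\<lambda>a b. \<gamma> a (b * x') (inv S h1 * g2))))" for x g
        by (simp only: S2_swap[of "\<omega> _"] S2_swap[of "cop g"])
      finally have "R p (\<lambda>x g. C (inv S g) (\<lambda>k1 k2. W k1 (\<lambda>a b. R x (\<lambda>x' g2. \<gamma> a (b * x') (k2 * g2)))))
          = R p (\<lambda>x g. R x (\<lambda>x' g2. C g (\<lambda>h1 h2. W (inv S h2) (\<lambda>a b. \<gamma> a (b * x') (inv S h1 * g2)))))" by simp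
      also have "\<dots> = R p (\<lambda>x g. C g (\<lambda>g2 g3. C g3 (\<lambda>h1 h2. W (inv S h2) (\<lambda>a b. \<gamma> a (b * x) (inv S h1 * g2)))))"
        by (rule R_coassoc) (use t in \<open>simp add: mls\<close>)
      also have "\<dots> = R p (\<lambda>x g. C g (\<lambda>w h2. C w (\<lambda>g2 h1. W (inv S h2) (\<lambda>a b. \<gamma> a (b * x) (inv S h1 * g2)))))"
      proof -
        have "C g (\<lambda>g2 g3. C g3 (\<lambda>h1 h2. W (inv S h2) (\<lambda>a b. \<gamma> a (b * x) (inv S h1 * g2))))
           = C g (\<lambda>w h2. C w (\<lambda>g2 h1. W (inv S h2) (\<lambda>a b. \<gamma> a (b * x) (inv S h1 * g2))))" for x g
          by (rule C_coassoc[symmetric]) (use t in \<open>simp add: mls\<close>)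
        then show ?thesis by simp
      qed
      also have "\<dots> = R p (\<lambda>x g. C g (\<lambda>w h2. eps w * W (inv S h2) (\<lambda>a b. \<gamma> a (b * x) 1)))"
      proof -
        have "C w (\<lambda>g2 h1. W (inv S h2) (\<lambda>a b. \<gamma> a (b * x) (inv S h1 * g2))) = eps w * W (inv S h2) (\<lambda>a b. \<gamma> a (b * x) 1)" for x w h2
          by (rule C_anti_inv2[where f="\<lambda>m. W (inv S h2) (\<lambda>a b. \<gamma> a (b * x) m)"]) (use t in \<open>simp add: mls\<close>)
        then show ?thesis by simp
      qed
      also have "\<dots> = R p (\<lambda>x g. W (inv S g) (\<lambda>a b. \<gamma> a (b * x) 1))"
      proof -
        have "C g (\<lambda>w h2. eps w * W (inv S h2) (\<lambda>a b. \<gamma> a (b * x) 1)) = W (inv S g) (\<lambda>a b. \<gamma> a (b * x) 1)" for x g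
          by (rule C_counitL) (use t in \<open>simp add: mls\<close>)
        then show ?thesis by simp
      qed
      finally show ?thesis .
    qed
    have "R p (\<lambda>x g. W (inv S g) (\<lambda>a b. R (b * x) (\<lambda>y g. \<gamma> a y g)))
       = R p (\<lambda>x g. R x (\<lambda>x' g2. \<gamma> 1 x' (inv S g * g2)) - eps g * R x (\<lambda>x' g2. \<gamma> 1 x' g2)
         + C (inv S g) (\<lambda>k1 k2. W k1 (\<lambda>a b. R x (\<lambda>x' g2. \<gamma> a (b * x') (k2 * g2)))))"
      by (simp only: s1 s2 eps_Si)
    also have "\<dots> = \<gamma> 1 p 1 - R p (\<lambda>x' g2. \<gamma> 1 x' g2) + R p (\<lambda>x g. W (inv S g) (\<lambda>a b. \<gamma> a (b * x) 1))"
      using T1 T2 T3 by simp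
    finally have Y: "R p (\<lambda>x g. W (inv S g) (\<lambda>a b. R (b * x) (\<lambda>y g. \<gamma> a y g)))
       = \<gamma> 1 p 1 - R p (\<lambda>x' g2. \<gamma> 1 x' g2) + R p (\<lambda>x g. W (inv S g) (\<lambda>a b. \<gamma> a (b * x) 1))" .
    show "S2 (Dbar p) (\<lambda>a b. R b (\<lambda>y g. \<gamma> a y g)) = S2 (Dbar p) (\<lambda>a b. \<gamma> a b 1)"
      unfolding Dbar_S2[OF bF] Dbar_S2[OF bG] r1 Y by simp
  qed
  then obtain zs where "set zs \<subseteq> UNIV \<times> M" "teq2 sP sP (Dbar p) zs" by blast
  then show ?thesis using X1' mu_Dbar by blast
qed

end

theorem proposition3p4:
  fixes sP :: "'k::field \<Rightarrow> 'p::ring_1 \<Rightarrow> 'p"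
    and sH :: "'k \<Rightarrow> 'h::ring_1 \<Rightarrow> 'h"
    and cop :: "'h \<Rightarrow> ('h \<times> 'h) list"
    and eps :: "'h \<Rightarrow> 'k"
    and S :: "'h \<Rightarrow> 'h"
    and DR :: "'p \<Rightarrow> ('p \<times> 'h) list"
    and \<omega> :: "'h \<Rightarrow> ('p \<times> 'p) list"
  assumes qpb_assm: "qpb sP sH cop eps S DR"
    and conn: "connection sP sH cop eps S DR \<omega>"
  shows "(left_strong sP sH DR \<omega> \<longleftrightarrow>
            (\<forall>h. teq3 sH sP sP (lift_left (DL S DR) (\<omega> h))
               ([(h, 1, 1), (- sH (eps h) 1, 1, 1)]
                @ concat (map (\<lambda>(h1, h2). map (\<lambda>(a, b). (h1, a, b)) (\<omega> h2)) (cop h)))))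
       \<and> (left_strong sP sH DR \<omega> \<longleftrightarrow>
            (\<forall>h. teq3 sP sP sH (lift_right DR (\<omega> h))
               ([(1, 1, h), (- sP (eps h) 1, 1, 1)]
                @ concat (map (\<lambda>(h1, h2). map (\<lambda>(a, b). (a, b, h2)) (\<omega> h1)) (cop h)))))
       \<and> (left_strong sP sH DR \<omega> \<longrightarrow>
            (\<forall>p. in_P_OmM sP (coinv sP sH DR) (dP p @ tneg (Pibar_om S DR \<omega> (dP p)))))"
proof -
  interpret Q: QPB sP sH cop eps S DR \<omega> using qpb_assm conn by unfold_locales
  have A: "left_strong sP sH DR \<omega> \<longleftrightarrow> (\<forall>h. Q.c2 h)"
    using Q.i_iii Q.iii_ii Q.ii_i by blast
  have B: "left_strong sP sH DR \<omega> \<longleftrightarrow> (\<forall>h. Q.c3 h)"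
    using Q.i_iii Q.iii_ii Q.ii_i by blast
  have C: "left_strong sP sH DR \<omega> \<longrightarrow> (\<forall>p. in_P_OmM sP (coinv sP sH DR) (Q.Dbar p))"
    using Q.i_iii Q.i_iv by blast
  show ?thesis using A B C unfolding Q.c2_def Q.c3_def Q.Dbar_def by blast
qed

end
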